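(* Suppose $0<p<1$ and $q>0$. Let $(S,I)$ be an endemic equilibrium and $\kappa=d_SS+d_II$ (a positive constant). Then $\frac{\kappa}{d_I}\ge M_*$, where $M_*$ is the unique positive solution of $$\frac{N}{|\Omega|}=M_*+r_{\max}^{1/q}M_*^{\frac{1-p}{q}}.$$ Furthermore, if $d_S\le d_I$, then $\frac{\kappa}{d_I}\le\frac{N}{|\Omega|}$.
   Context: Let $\Omega\subset\mathbb R^n$ be a bounded domain with smooth boundary, $\nu$ the outward unit normal on $\partial\Omega$, and $|\Omega|$ its Lebesgue measure. Let $\beta,\gamma$ be positive Hölder continuous functions on $\bar\Omega$, $N>0$, $q>0$, $0<p<1$, and $d_S,d_I>0$. Consider the system $$d_S\Delta S-\beta S^qI^p+\gamma I=0,\quad d_I\Delta I+\beta S^qI^p-\gamma I=0\ \text{ in }\Omega,\qquad \partial_\nu S=\partial_\nu I=0\ \text{ on }\partial\Omega,\qquad \int_\Omega(S+I)=N.$$ An endemic equilibrium is a nonnegative classical solution $(S,I)$ with $I\not\equiv0$. Define $r=\gamma/\beta$ and $r_{\max}=\max_{\bar\Omega}r$. *)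

theory Defs
  imports "HOL-Analysis.Analysis"
begin

definition partial :: "'n::finite \<Rightarrow> (real^'n \<Rightarrow> real) \<Rightarrow> real^'n \<Rightarrow> real" where
  "partial i f x = frechet_derivative f (at x) (axis i 1)"

definition grad :: "(real^'n::finite \<Rightarrow> real) \<Rightarrow> real^'n \<Rightarrow> real^'n" where
  "grad f x = (\<chi> i. partial i f x)"

definition laplacian :: "(real^'n::finite \<Rightarrow> real) \<Rightarrow> real^'n \<Rightarrow> real" where
  "laplacian f x = (\<Sum>i\<in>UNIV. partial i (\<lambda>y. partial i f y) x)"

coinductive smooth_on :: "(real^'n::finite) set \<Rightarrow> (real^'n \<Rightarrow> real) \<Rightarrow> bool" for U where
  "continuous_on U f \<Longrightarrow> f differentiable_on U \<Longrightarrow> (\<forall>i. smooth_on U (\<lambda>x. partial i f x))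
     \<Longrightarrow> smooth_on U f"

definition C2_on :: "(real^'n::finite) set \<Rightarrow> (real^'n \<Rightarrow> real) \<Rightarrow> bool" where
  "C2_on U f \<longleftrightarrow> f differentiable_on U \<and> (\<forall>i. (\<lambda>x. partial i f x) differentiable_on U)
     \<and> (\<forall>i j. continuous_on U (\<lambda>x. partial j (\<lambda>y. partial i f y) x))"

text \<open>This is the standard characterisation of a bounded domain with smooth boundary.\<close>
definition smooth_defining_function :: "(real^'n::finite) set \<Rightarrow> (real^'n \<Rightarrow> real) \<Rightarrow> bool" where
  "smooth_defining_function \<Omega> \<rho> \<longleftrightarrow> smooth_on UNIV \<rho> \<and> \<Omega> = {x. \<rho> x < 0}
     \<and> (\<forall>x. \<rho> x = 0 \<longrightarrow> grad \<rho> x \<noteq> 0)"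

definition outward_normal :: "(real^'n::finite \<Rightarrow> real) \<Rightarrow> real^'n \<Rightarrow> real^'n" where
  "outward_normal \<rho> x = (1 / norm (grad \<rho> x)) *\<^sub>R grad \<rho> x"

definition bounded_smooth_domain :: "(real^'n::finite) set \<Rightarrow> (real^'n \<Rightarrow> real) \<Rightarrow> bool" where
  "bounded_smooth_domain \<Omega> \<rho> \<longleftrightarrow> open \<Omega> \<and> connected \<Omega> \<and> \<Omega> \<noteq> {} \<and> bounded \<Omega>
     \<and> smooth_defining_function \<Omega> \<rho>"

definition holder_on :: "(real^'n::finite) set \<Rightarrow> (real^'n \<Rightarrow> real) \<Rightarrow> bool" where
  "holder_on A f \<longleftrightarrow> (\<exists>\<alpha> C. 0 < \<alpha> \<and> \<alpha> \<le> 1 \<and>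
     (\<forall>x\<in>A. \<forall>y\<in>A. \<bar>f x - f y\<bar> \<le> C * dist x y powr \<alpha>))"

definition neumann_classical :: "(real^'n::finite) set \<Rightarrow> (real^'n \<Rightarrow> real) \<Rightarrow> (real^'n \<Rightarrow> real) \<Rightarrow> bool" where
  "neumann_classical \<Omega> \<rho> f \<longleftrightarrow> C2_on \<Omega> f \<and> continuous_on (closure \<Omega>) f \<and>
     (\<exists>G. continuous_on (closure \<Omega>) G \<and> (\<forall>x\<in>\<Omega>. G x = grad f x)
          \<and> (\<forall>x\<in>frontier \<Omega>. G x \<bullet> outward_normal \<rho> x = 0))"

definition endemic_equilibrium ::
  "(real^'n::finite) set \<Rightarrow> (real^'n \<Rightarrow> real) \<Rightarrow> real \<Rightarrow> real \<Rightarrow> (real^'n \<Rightarrow> real) \<Rightarrow> (real^'n \<Rightarrow> real)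
   \<Rightarrow> real \<Rightarrow> real \<Rightarrow> real \<Rightarrow> (real^'n \<Rightarrow> real) \<Rightarrow> (real^'n \<Rightarrow> real) \<Rightarrow> bool" where
  "endemic_equilibrium \<Omega> \<rho> dS dI \<beta> \<gamma> N q p S I \<longleftrightarrow>
     neumann_classical \<Omega> \<rho> S \<and> neumann_classical \<Omega> \<rho> I \<and>
     (\<forall>x\<in>closure \<Omega>. S x \<ge> 0 \<and> I x \<ge> 0) \<and> (\<exists>x\<in>\<Omega>. I x \<noteq> 0) \<and>
     (\<forall>x\<in>\<Omega>. dS * laplacian S x - \<beta> x * S x powr q * I x powr p + \<gamma> x * I x = 0) \<and>
     (\<forall>x\<in>\<Omega>. dI * laplacian I x + \<beta> x * S x powr q * I x powr p - \<gamma> x * I x = 0) \<and>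
     integral \<Omega> (\<lambda>x. S x + I x) = N"

end

theory Submission
  imports Defs
begin

lemma fd_expand:
  fixes f :: "real^'n::finite \<Rightarrow> real"
  assumes "f differentiable (at x)"
  shows "frechet_derivative f (at x) h = (\<Sum>i\<in>UNIV. h$i * partial i f x)"
proof -
  have lin: "linear (frechet_derivative f (at x))"
    using assms frechet_derivative_works has_derivative_linear by blast
  have "frechet_derivative f (at x) h = frechet_derivative f (at x) (\<Sum>i\<in>UNIV. h $ i *s axis i 1)"
    by (simp add: basis_expansion)
  also have "\<dots> = (\<Sum>i\<in>UNIV. h$i * frechet_derivative f (at x) (axis i 1))"
    using lin by (simp add: linear_sum linear_scale scalar_mult_eq_scaleR)
  finally show ?thesis by (simp add: partial_def)
qed

lemma dir_deriv:
  fixes f :: "real^'n::finite \<Rightarrow> real"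
  assumes "f differentiable (at x)"
  shows "((\<lambda>t. f (x + t *\<^sub>R v)) has_real_derivative frechet_derivative f (at x) v) (at 0)"
proof -
  have d: "(f has_derivative frechet_derivative f (at x)) (at x)"
    using assms frechet_derivative_works by blast
  have lin: "linear (frechet_derivative f (at x))"
    using d has_derivative_linear by blast
  have "((\<lambda>t. x + t *\<^sub>R v) has_derivative (\<lambda>t. t *\<^sub>R v)) (at 0)"
    by (auto intro!: derivative_eq_intros)
  moreover have "(f has_derivative frechet_derivative f (at x)) (at ((\<lambda>t. x + t *\<^sub>R v) 0))"
    using d by simp
  ultimately have "((\<lambda>t. f (x + t *\<^sub>R v)) has_derivative (\<lambda>t. frechet_derivative f (at x) (t *\<^sub>R v))) (at 0)"
    by (drule_tac diff_chain_at) (auto simp: o_def)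
  moreover have "(\<lambda>t. frechet_derivative f (at x) (t *\<^sub>R v)) = (\<lambda>t. frechet_derivative f (at x) v * t)"
    using lin by (auto simp: linear_scale)
  ultimately show ?thesis by (simp add: has_field_derivative_def)
qed

lemma second_deriv_max_1d:
  fixes g h :: "real \<Rightarrow> real"
  assumes r: "r > 0"
    and gd: "\<And>t. \<bar>t\<bar> < r \<Longrightarrow> (g has_real_derivative h t) (at t)"
    and mx: "\<And>t. \<bar>t\<bar> < r \<Longrightarrow> g t \<le> g 0"
    and hd: "(h has_real_derivative d) (at 0)"
  shows "d \<le> 0"
proof (rule ccontr)
  assume "\<not> d \<le> 0"
  hence dp: "d > 0" by simp
  have h0: "h 0 = 0"
    using DERIV_local_max[OF gd[of 0] r] mx r by auto
  obtain e where e: "e > 0" "\<forall>s>0. s < e \<longrightarrow> h 0 < h (0 + s)"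
    using DERIV_pos_inc_right[OF hd dp] by blast
  define t where "t = min e r / 2"
  have t: "0 < t" "t < e" "t < r" using e r by (auto simp: t_def)
  have "\<forall>s. 0 \<le> s \<and> s \<le> t \<longrightarrow> (g has_real_derivative h s) (at s)"
    using gd t by auto
  then obtain z where z: "0 < z" "z < t" "g t - g 0 = (t - 0) * h z"
    using MVT2[of 0 t g h] t by blast
  have "h z > 0" using e(2) z t h0 by auto
  hence "t * h z > 0" using z t by (simp add: mult_pos_pos)
  hence "g t > g 0" using z by simp
  moreover have "g t \<le> g 0" using mx t by auto
  ultimately show False by simp
qed

lemma sdt:
  fixes w :: "real^'n::finite \<Rightarrow> real"
  assumes d1: "\<And>x i. x \<in> U \<Longrightarrow> ((\<lambda>t. w (x + t *\<^sub>R axis i 1)) has_real_derivative D1 i x) (at 0)"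
    and d2: "\<And>x i. x \<in> U \<Longrightarrow> ((\<lambda>t. D1 i (x + t *\<^sub>R axis i 1)) has_real_derivative D2 i x) (at 0)"
    and r: "r > 0" "ball x r \<subseteq> U" "\<forall>y\<in>ball x r. w y \<le> w x"
  shows "D2 i x \<le> 0"
proof -
  let ?e = "axis i 1 :: real^'n"
  have ne: "norm ?e = 1" by simp
  have inb: "x + t *\<^sub>R ?e \<in> ball x r" if "\<bar>t\<bar> < r" for t
    using that by (simp add: dist_norm)
  show ?thesis
  proof (rule second_deriv_max_1d[OF r(1), of "\<lambda>t. w (x + t *\<^sub>R ?e)" "\<lambda>t. D1 i (x + t *\<^sub>R ?e)"])
    fix t :: real assume t: "\<bar>t\<bar> < r"
    have "x + t *\<^sub>R ?e \<in> U" using inb[OF t] r by auto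
    from d1[OF this, of i]
    have "((\<lambda>s. w (x + (s + t) *\<^sub>R ?e)) has_real_derivative D1 i (x + t *\<^sub>R ?e)) (at 0)"
      by (simp add: algebra_simps scaleR_add_left)
    thus "((\<lambda>t. w (x + t *\<^sub>R ?e)) has_real_derivative D1 i (x + t *\<^sub>R ?e)) (at t)"
      using DERIV_shift[of "\<lambda>t. w (x + t *\<^sub>R ?e)" _ 0 t] by simp
  next
    fix t :: real assume t: "\<bar>t\<bar> < r"
    show "w (x + t *\<^sub>R ?e) \<le> w (x + 0 *\<^sub>R ?e)" using r(3) inb[OF t] by simp
  next
    show "((\<lambda>t. D1 i (x + t *\<^sub>R ?e)) has_real_derivative D2 i x) (at 0)"
      using d2[of x i] r by (meson centre_in_ball subsetD)
  qed
qed

lemma sdt_sum: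
  fixes w :: "real^'n::finite \<Rightarrow> real"
  assumes d1: "\<And>x i. x \<in> U \<Longrightarrow> ((\<lambda>t. w (x + t *\<^sub>R axis i 1)) has_real_derivative D1 i x) (at 0)"
    and d2: "\<And>x i. x \<in> U \<Longrightarrow> ((\<lambda>t. D1 i (x + t *\<^sub>R axis i 1)) has_real_derivative D2 i x) (at 0)"
    and r: "r > 0" "ball x r \<subseteq> U" "\<forall>y\<in>ball x r. w y \<le> w x"
  shows "(\<Sum>i\<in>UNIV. D2 i x) \<le> 0"
  by (rule sum_nonpos) (use sdt[OF d1 d2 r] in auto)

lemma nsq_axis:
  fixes x y :: "real^'n::finite"
  shows "(norm (x + t *\<^sub>R axis i 1 - y))\<^sup>2 = (norm (x - y))\<^sup>2 + 2 * t * ((x - y)$i) + t\<^sup>2"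
proof -
  have e: "x + t *\<^sub>R axis i 1 - y = (x - y) + t *\<^sub>R axis i 1" by (simp add: algebra_simps)
  have "(norm (x + t *\<^sub>R axis i 1 - y))\<^sup>2 = ((x - y) + t *\<^sub>R axis i 1) \<bullet> ((x - y) + t *\<^sub>R axis i 1)"
    unfolding e by (rule power2_norm_eq_inner)
  also have "\<dots> = (x - y) \<bullet> (x - y) + 2 * t * ((x-y) \<bullet> axis i 1) + t * t * (axis i 1 \<bullet> (axis i (1::real) :: real^'n))"
    by (simp add: inner_add_left inner_add_right inner_commute algebra_simps)
  also have "\<dots> = (norm (x - y))\<^sup>2 + 2 * t * ((x - y)$i) + t\<^sup>2"
    by (simp add: inner_axis power2_norm_eq_inner[symmetric] power2_eq_square)
  finally show ?thesis .
qed

definition bar :: "real \<Rightarrow> real^'n::finite \<Rightarrow> real^'n \<Rightarrow> real" where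
  "bar \<alpha> y x = exp (- \<alpha> * (norm (x - y))\<^sup>2)"

definition bD1 :: "real \<Rightarrow> real^'n::finite \<Rightarrow> 'n \<Rightarrow> real^'n \<Rightarrow> real" where
  "bD1 \<alpha> y i x = - 2 * \<alpha> * ((x - y)$i) * bar \<alpha> y x"

definition bD2 :: "real \<Rightarrow> real^'n::finite \<Rightarrow> 'n \<Rightarrow> real^'n \<Rightarrow> real" where
  "bD2 \<alpha> y i x = bar \<alpha> y x * (4 * \<alpha>\<^sup>2 * ((x - y)$i)\<^sup>2 - 2 * \<alpha>)"

lemma bar_d1: "((\<lambda>t. bar \<alpha> y (x + t *\<^sub>R axis i 1)) has_real_derivative bD1 \<alpha> y i x) (at 0)"
proof -
  let ?a = "(x - y)$i" and ?n = "(norm (x - y))\<^sup>2"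
  have eq: "(\<lambda>t. bar \<alpha> y (x + t *\<^sub>R axis i 1)) = (\<lambda>t. exp (- \<alpha> * (?n + 2 * t * ?a + t\<^sup>2)))"
    by (simp add: bar_def nsq_axis)
  have "((\<lambda>t. exp (- \<alpha> * (?n + 2 * t * ?a + t\<^sup>2))) has_real_derivative
      exp (- \<alpha> * (?n + 2 * 0 * ?a + 0\<^sup>2)) * (- \<alpha> * (2 * ?a + 2 * 0))) (at 0)"
    by (auto intro!: derivative_eq_intros)
  moreover have "exp (- \<alpha> * (?n + 2 * 0 * ?a + 0\<^sup>2)) * (- \<alpha> * (2 * ?a + 2 * 0)) = bD1 \<alpha> y i x"
    by (simp add: bD1_def bar_def)
  ultimately show ?thesis unfolding eq by simp
qed

lemma bar_d2: "((\<lambda>t. bD1 \<alpha> y i (x + t *\<^sub>R axis i 1)) has_real_derivative bD2 \<alpha> y i x) (at 0)"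
proof -
  let ?a = "(x - y)$i" and ?n = "(norm (x - y))\<^sup>2"
  have eq: "(\<lambda>t. bD1 \<alpha> y i (x + t *\<^sub>R axis i 1)) = (\<lambda>t. - 2 * \<alpha> * (?a + t) * exp (- \<alpha> * (?n + 2 * t * ?a + t\<^sup>2)))"
    by (simp add: bD1_def bar_def nsq_axis algebra_simps)
  have "((\<lambda>t. - 2 * \<alpha> * (?a + t) * exp (- \<alpha> * (?n + 2 * t * ?a + t\<^sup>2))) has_real_derivative
      - 2 * \<alpha> * (0 + 1) * exp (- \<alpha> * (?n + 2 * 0 * ?a + 0\<^sup>2)) + - 2 * \<alpha> * (?a + 0) * (exp (- \<alpha> * (?n + 2 * 0 * ?a + 0\<^sup>2)) * (- \<alpha> * (2 * ?a + 2 * 0)))) (at 0)"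
    by (auto intro!: derivative_eq_intros)
  moreover have "- 2 * \<alpha> * (0 + 1) * exp (- \<alpha> * (?n + 2 * 0 * ?a + 0\<^sup>2)) + - 2 * \<alpha> * (?a + 0) * (exp (- \<alpha> * (?n + 2 * 0 * ?a + 0\<^sup>2)) * (- \<alpha> * (2 * ?a + 2 * 0))) = bD2 \<alpha> y i x"
    by (simp add: bD2_def bar_def algebra_simps power2_eq_square)
  ultimately show ?thesis unfolding eq by simp
qed

lemma bar_sum:
  fixes x y :: "real^'n::finite"
  shows "(\<Sum>i\<in>UNIV. bD2 \<alpha> y i x) = bar \<alpha> y x * (4 * \<alpha>\<^sup>2 * (norm (x - y))\<^sup>2 - 2 * \<alpha> * CARD('n))"
proof -
  have "(norm (x - y))\<^sup>2 = (x - y) \<bullet> (x - y)" by (rule power2_norm_eq_inner)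
  also have "\<dots> = (\<Sum>i\<in>UNIV. ((x - y)$i)\<^sup>2)"
    unfolding inner_vec_def by (simp add: power2_eq_square)
  finally have "(norm (x - y))\<^sup>2 = (\<Sum>i\<in>UNIV. ((x - y)$i)\<^sup>2)" .
  thus ?thesis
    by (simp add: bD2_def sum_distrib_left sum_subtractf sum_distrib_right[symmetric] algebra_simps)
qed

lemma bar_le1: "\<alpha> \<ge> 0 \<Longrightarrow> bar \<alpha> y x \<le> 1"
  by (simp add: bar_def)

lemma bar_ge: "\<alpha> \<ge> 0 \<Longrightarrow> norm (x - y) \<le> R \<Longrightarrow> exp (- \<alpha> * R\<^sup>2) \<le> bar \<alpha> y x"
  unfolding bar_def
  by (simp add: mult_left_mono power_mono)

lemma hopf_core:
  fixes w c :: "real^'n::finite \<Rightarrow> real" and D1 D2 :: "'n \<Rightarrow> real^'n \<Rightarrow> real"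
  assumes U: "open U" and R: "R > 0" and x0: "norm (x0 - y) = R"
    and sub: "cball y R - {x0} \<subseteq> U"
    and cont: "continuous_on (cball y R) w"
    and w0: "w x0 = 0" and neg: "\<forall>x\<in>ball y R. w x < 0"
    and d1: "\<And>x i. x \<in> U \<Longrightarrow> ((\<lambda>t. w (x + t *\<^sub>R axis i 1)) has_real_derivative D1 i x) (at 0)"
    and d2: "\<And>x i. x \<in> U \<Longrightarrow> ((\<lambda>t. D1 i (x + t *\<^sub>R axis i 1)) has_real_derivative D2 i x) (at 0)"
    and ell: "\<forall>x\<in>U. (\<Sum>i\<in>UNIV. D2 i x) \<ge> c x * w x"
    and cb: "\<forall>x\<in>U. 0 \<le> c x \<and> c x \<le> C"
  shows "\<exists>k>0. \<forall>t. 0 < t \<and> t < R/2 \<longrightarrow> w (x0 + (t/R) *\<^sub>R (y - x0)) \<le> - k * t"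
proof -
  have wle: "w x \<le> 0" if "x \<in> cball y R" for x
    using continuous_le_on_closure[of "ball y R" w x 0] cont that neg R by (force simp: closure_ball)
  define Sph where "Sph = sphere y (R/2)"
  have Sph_ne: "Sph \<noteq> {}" using R by (simp add: Sph_def sphere_eq_empty)
  have Sph_sub: "Sph \<subseteq> ball y R" using R by (auto simp: Sph_def dist_commute)
  have "continuous_on Sph w"
    using cont Sph_sub by (meson ball_subset_cball continuous_on_subset order.trans)
  then obtain s where s: "s \<in> Sph" "\<forall>x\<in>Sph. w x \<le> w s"
    using continuous_attains_sup[of Sph w] Sph_ne by (auto simp: Sph_def)
  define \<delta> where "\<delta> = - w s"
  have \<delta>: "\<delta> > 0" using neg s Sph_sub by (auto simp: \<delta>_def)
  have wS: "w x \<le> - \<delta>" if "x \<in> Sph" for x using s that by (auto simp: \<delta>_def)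
  define n where "n = real CARD('n)"
  have C0: "C \<ge> 0"
  proof -
    have "y \<in> cball y R - {x0}" using R x0 by auto
    thus ?thesis using cb sub by fastforce
  qed
  define \<alpha> where "\<alpha> = max 1 ((2 * n + C + 1) / R\<^sup>2)"
  have \<alpha>1: "\<alpha> \<ge> 1" by (simp add: \<alpha>_def)
  have \<alpha>R: "\<alpha> * R\<^sup>2 \<ge> 2 * n + C + 1"
  proof -
    have "(2 * n + C + 1) / R\<^sup>2 \<le> \<alpha>" by (simp add: \<alpha>_def)
    thus ?thesis using R by (simp add: divide_le_eq)
  qed
  define K where "K = exp (- \<alpha> * R\<^sup>2)"
  define v where "v x = bar \<alpha> y x - K" for x
  define F where "F x = w x + \<delta> * v x" for x
  define A where "A = cball y R - ball y (R/2)"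
  have Kpos: "K > 0" by (simp add: K_def)
  have vle: "v x < 1" for x using bar_le1[of \<alpha> y x] \<alpha>1 Kpos unfolding v_def by linarith
  have vge: "v x \<ge> 0" if "norm (x - y) \<le> R" for x
    using bar_ge[OF _ that, of \<alpha>] \<alpha>1 by (simp add: v_def K_def)
  have vlebar: "v x \<le> bar \<alpha> y x" for x by (simp add: v_def K_def)
  have Acomp: "compact A" unfolding A_def
    by (intro compact_diff compact_cball open_ball)
  have x0A: "x0 \<in> A" using x0 R by (auto simp: A_def dist_norm norm_minus_commute)
  have vcont: "continuous_on A v" unfolding v_def bar_def
    by (intro continuous_intros)
  have "continuous_on A F" unfolding F_def
    using cont vcont by (intro continuous_intros) (auto simp: A_def elim: continuous_on_subset)
  then obtain z where z: "z \<in> A" "\<forall>x\<in>A. F x \<le> F z"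
    using continuous_attains_sup[OF Acomp _ ] x0A by blast
  have Fz: "F z \<le> 0"
  proof -
    have nz: "R/2 \<le> norm (z - y)" "norm (z - y) \<le> R"
      using z(1) by (auto simp: A_def dist_norm norm_minus_commute)
    consider "norm (z - y) = R/2" | "norm (z - y) = R" | "R/2 < norm (z - y)" "norm (z - y) < R"
      using nz by linarith
    thus ?thesis
    proof cases
      case 1
      hence "z \<in> Sph" by (simp add: Sph_def dist_norm norm_minus_commute)
      hence "w z \<le> - \<delta>" by (rule wS)
      moreover have "\<delta> * v z \<le> \<delta>" using vle[of z] \<delta> by (simp add: mult_left_le)
      ultimately show ?thesis by (simp add: F_def)
    next
      case 2
      hence "v z = 0" by (simp add: v_def bar_def K_def)
      moreover have "w z \<le> 0" using wle z(1) by (simp add: A_def)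
      ultimately show ?thesis by (simp add: F_def)
    next
      case 3
      show ?thesis
      proof (rule ccontr)
        assume "\<not> F z \<le> 0"
        hence Fpos: "F z > 0" by simp
        define V where "V = U \<inter> ball y R \<inter> - cball y (R/2)"
        have Vo: "open V" unfolding V_def using U by (intro open_Int open_ball) auto
        have zU: "z \<in> U" using sub 3 x0 by (auto simp: dist_norm norm_minus_commute)
        have zV: "z \<in> V" using zU 3 by (auto simp: V_def dist_norm norm_minus_commute)
        obtain r where r: "r > 0" "ball z r \<subseteq> V" using Vo zV open_contains_ball by blast
        have VA: "V \<subseteq> A" by (auto simp: V_def A_def)
        have VU: "V \<subseteq> U" by (auto simp: V_def)
        have d1F: "((\<lambda>t. F (x + t *\<^sub>R axis i 1)) has_real_derivative D1 i x + \<delta> * bD1 \<alpha> y i x) (at 0)"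
          if "x \<in> V" for x i
        proof -
          have xU: "x \<in> U" using VU that by auto
          show ?thesis
            unfolding F_def v_def
            using d1[OF xU, of i] bar_d1[of \<alpha> y x i]
            by (auto intro!: derivative_eq_intros)
        qed
        have d2F: "((\<lambda>t. D1 i (x + t *\<^sub>R axis i 1) + \<delta> * bD1 \<alpha> y i (x + t *\<^sub>R axis i 1)) has_real_derivative
              D2 i x + \<delta> * bD2 \<alpha> y i x) (at 0)" if "x \<in> V" for x i
        proof -
          have xU: "x \<in> U" using VU that by auto
          show ?thesis
            using d2[OF xU, of i] bar_d2[of \<alpha> y i x]
            by (auto intro!: derivative_eq_intros)
        qed
        have mxF: "\<forall>y\<in>ball z r. F y \<le> F z" using r VA z by blast
        have sum_le: "(\<Sum>i\<in>UNIV. D2 i z + \<delta> * bD2 \<alpha> y i z) \<le> 0"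
          using sdt_sum[OF d1F d2F r(1) r(2) mxF] by blast
        have e1: "(\<Sum>i\<in>UNIV. D2 i z) \<ge> c z * w z" using ell zU by auto
        have cz: "0 \<le> c z" "c z \<le> C" using cb zU by auto
        have vz: "0 \<le> v z" using vge 3 by simp
        have "c z * w z = c z * F z - c z * (\<delta> * v z)" by (simp add: F_def algebra_simps)
        also have "\<dots> \<ge> - (C * (\<delta> * bar \<alpha> y z))"
        proof -
          have "c z * F z \<ge> 0" using cz Fpos by simp
          moreover have "c z * (\<delta> * v z) \<le> C * (\<delta> * bar \<alpha> y z)"
            using cz vz vlebar[of z] \<delta> by (intro mult_mono mult_left_mono) auto
          ultimately show ?thesis by linarith
        qed
        finally have e2: "c z * w z \<ge> - (C * (\<delta> * bar \<alpha> y z))" .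
        have bs: "(\<Sum>i\<in>UNIV. bD2 \<alpha> y i z) = bar \<alpha> y z * (4 * \<alpha>\<^sup>2 * (norm (z - y))\<^sup>2 - 2 * \<alpha> * n)"
          by (simp add: bar_sum n_def)
        have "4 * \<alpha>\<^sup>2 * (norm (z - y))\<^sup>2 \<ge> \<alpha>\<^sup>2 * R\<^sup>2"
        proof -
          have "(R/2)\<^sup>2 \<le> (norm (z - y))\<^sup>2" using 3 R by (intro power_mono) auto
          hence "R\<^sup>2 \<le> 4 * (norm (z - y))\<^sup>2" by (simp add: power_divide)
          from mult_left_mono[OF this, of "\<alpha>\<^sup>2"] show ?thesis by (simp add: algebra_simps)
        qed
        moreover have "\<alpha>\<^sup>2 * R\<^sup>2 - 2 * \<alpha> * n - C \<ge> 1"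
        proof -
          have h0: "\<alpha>\<^sup>2 * R\<^sup>2 - 2 * \<alpha> * n - C = \<alpha> * (\<alpha> * R\<^sup>2 - 2 * n) - C" by (simp add: power2_eq_square algebra_simps)
          have "\<alpha> * (\<alpha> * R\<^sup>2 - 2 * n) \<ge> \<alpha> * (C + 1)" using \<alpha>R \<alpha>1 by (intro mult_left_mono) auto
          moreover have "\<alpha> * (C + 1) \<ge> 1 * (C + 1)" using \<alpha>1 C0 by (intro mult_right_mono) auto
          moreover have "\<And>A B. B \<le> A \<Longrightarrow> 1 * (C + 1) \<le> B \<Longrightarrow> 1 \<le> A - C" by (simp; linarith)
          ultimately show ?thesis unfolding h0 by blast
        qed
        ultimately have pos: "4 * \<alpha>\<^sup>2 * (norm (z - y))\<^sup>2 - 2 * \<alpha> * n - C > 0" by linarith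
        have bpos: "bar \<alpha> y z > 0" by (simp add: bar_def)
        have "(\<Sum>i\<in>UNIV. D2 i z + \<delta> * bD2 \<alpha> y i z) = (\<Sum>i\<in>UNIV. D2 i z) + \<delta> * (\<Sum>i\<in>UNIV. bD2 \<alpha> y i z)"
          by (simp add: sum.distrib sum_distrib_left)
        also have "\<dots> \<ge> \<delta> * (bar \<alpha> y z * (4 * \<alpha>\<^sup>2 * (norm (z - y))\<^sup>2 - 2 * \<alpha> * n - C))"
        proof -
          define P where "P = bar \<alpha> y z * (4 * \<alpha>\<^sup>2 * (norm (z - y))\<^sup>2 - 2 * \<alpha> * n)"
          have "\<delta> * (bar \<alpha> y z * (4 * \<alpha>\<^sup>2 * (norm (z - y))\<^sup>2 - 2 * \<alpha> * n - C)) = \<delta> * P - C * (\<delta> * bar \<alpha> y z)"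
            by (simp add: P_def algebra_simps)
          moreover have "\<delta> * (\<Sum>i\<in>UNIV. bD2 \<alpha> y i z) = \<delta> * P" using bs by (simp add: P_def)
          ultimately show ?thesis using e1 e2 by linarith
        qed
        finally have "(\<Sum>i\<in>UNIV. D2 i z + \<delta> * bD2 \<alpha> y i z) > 0"
          using pos bpos \<delta> by (smt (verit) mult_pos_pos)
        thus False using sum_le by simp
      qed
    qed
  qed
  have FA: "w x + \<delta> * v x \<le> 0" if "x \<in> A" for x using z that Fz by (force simp: F_def)
  define k where "k = \<delta> * (\<alpha> * R * K)"
  have kpos: "k > 0" using \<delta> \<alpha>1 R by (simp add: k_def K_def)
  show ?thesis
  proof (intro exI[of _ k] conjI allI impI kpos)
    fix t :: real assume t: "0 < t \<and> t < R/2"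
    define x where "x = x0 + (t/R) *\<^sub>R (y - x0)"
    have "x - y = (1 - t/R) *\<^sub>R (x0 - y)" by (simp add: x_def algebra_simps)
    hence "norm (x - y) = \<bar>1 - t/R\<bar> * R" using x0 by simp
    also have "\<bar>1 - t/R\<bar> = 1 - t/R" using t R by (simp add: field_simps)
    finally have "norm (x - y) = (1 - t/R) * R" .
    also have "\<dots> = R - t" using R by (simp add: left_diff_distrib)
    finally have nx: "norm (x - y) = R - t" .
    have xA: "x \<in> A" using nx t by (auto simp: A_def dist_norm norm_minus_commute)
    have "v x = K * (exp (\<alpha> * (R\<^sup>2 - (R - t)\<^sup>2)) - 1)"
      by (simp add: v_def bar_def nx K_def algebra_simps flip: exp_add)
    also have "\<dots> \<ge> K * (\<alpha> * (R\<^sup>2 - (R - t)\<^sup>2))"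
      using exp_ge_add_one_self[of "\<alpha> * (R\<^sup>2 - (R - t)\<^sup>2)"] Kpos by (intro mult_left_mono) linarith+
    moreover have "\<alpha> * (R\<^sup>2 - (R - t)\<^sup>2) \<ge> \<alpha> * (R * t)"
      using t \<alpha>1 by (intro mult_left_mono) (auto simp: power2_eq_square algebra_simps)
    ultimately have "v x \<ge> K * (\<alpha> * (R * t))"
      by (smt (verit) K_def exp_gt_zero mult_left_mono)
    hence "\<delta> * v x \<ge> k * t" using \<delta> by (simp add: k_def mult_left_mono algebra_simps)
    thus "w x \<le> - k * t" using FA[OF xA] by simp
  qed
qed

lemma smooth_onD:
  assumes "smooth_on U f"
  shows "continuous_on U f" "f differentiable_on U" "\<And>i. smooth_on U (\<lambda>x. partial i f x)"
  using assms by (auto elim: smooth_on.cases)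

lemma grad_inner:
  fixes f :: "real^'n::finite \<Rightarrow> real"
  assumes "f differentiable (at x)"
  shows "frechet_derivative f (at x) h = grad f x \<bullet> h"
  using fd_expand[OF assms] by (simp add: grad_def inner_vec_def mult.commute)

lemma dir_deriv_at:
  fixes f :: "real^'n::finite \<Rightarrow> real"
  assumes "f differentiable (at (x + s *\<^sub>R v))"
  shows "((\<lambda>t. f (x + t *\<^sub>R v)) has_real_derivative frechet_derivative f (at (x + s *\<^sub>R v)) v) (at s)"
proof -
  from dir_deriv[OF assms, of v]
  have "((\<lambda>t. f (x + (t + s) *\<^sub>R v)) has_real_derivative frechet_derivative f (at (x + s *\<^sub>R v)) v) (at 0)"
    by (simp add: algebra_simps scaleR_add_left)
  thus ?thesis using DERIV_shift[of "\<lambda>t. f (x + t *\<^sub>R v)" _ 0 s] by simp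
qed

lemma taylor_quad:
  fixes \<rho> :: "real^'n::finite \<Rightarrow> real"
  assumes sm: "smooth_on UNIV \<rho>"
  shows "\<exists>C>0. \<forall>h. norm h \<le> 1 \<longrightarrow> \<rho> (x0 + h) \<le> \<rho> x0 + grad \<rho> x0 \<bullet> h + C * (norm h)\<^sup>2"
proof -
  have rd: "\<rho> differentiable (at x)" for x
    using smooth_onD(2)[OF sm] by (simp add: differentiable_on_def)
  have pd: "(\<lambda>x. partial i \<rho> x) differentiable (at x)" for i x
    using smooth_onD(2)[OF smooth_onD(3)[OF sm, of i]] by (simp add: differentiable_on_def)
  have pc: "continuous_on UNIV (\<lambda>x. partial j (\<lambda>y. partial i \<rho> y) x)" for i j
    using smooth_onD(1)[OF smooth_onD(3)[OF smooth_onD(3)[OF sm, of i], of j]] .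
  define q where "q x = (\<Sum>i\<in>UNIV. \<Sum>j\<in>UNIV. \<bar>partial j (\<lambda>y. partial i \<rho> y) x\<bar>)" for x
  have "continuous_on (cball x0 1) q" unfolding q_def
    using pc by (intro continuous_intros) (auto intro: continuous_on_subset)
  then obtain m where m: "m \<in> cball x0 1" "\<forall>x\<in>cball x0 1. q x \<le> q m"
    using continuous_attains_sup[of "cball x0 1" q] by auto
  define B where "B = q m"
  have B0: "B \<ge> 0" unfolding B_def q_def by (intro sum_nonneg) auto
  have lip: "\<bar>partial i \<rho> z - partial i \<rho> x0\<bar> \<le> B * norm (z - x0)" if z: "z \<in> cball x0 1" for i z
  proof -
    have "norm ((\<lambda>x. partial i \<rho> x) z - (\<lambda>x. partial i \<rho> x) x0) \<le> B * norm (z - x0)"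
    proof (rule differentiable_bound[where f' = "\<lambda>x. frechet_derivative (\<lambda>x. partial i \<rho> x) (at x)"])
      show "convex (cball x0 1)" by simp
      show "z \<in> cball x0 1" "x0 \<in> cball x0 1" using z by auto
    next
      fix x assume "x \<in> cball x0 1"
      show "((\<lambda>x. partial i \<rho> x) has_derivative frechet_derivative (\<lambda>x. partial i \<rho> x) (at x)) (at x within cball x0 1)"
        using pd[of i x] frechet_derivative_works has_derivative_at_withinI by blast
    next
      fix x assume x: "x \<in> cball x0 1"
      show "onorm (frechet_derivative (\<lambda>x. partial i \<rho> x) (at x)) \<le> B"
      proof (rule onorm_le)
        fix h :: "real^'n"
        have "norm (frechet_derivative (\<lambda>x. partial i \<rho> x) (at x) h)
            = \<bar>\<Sum>j\<in>UNIV. h$j * partial j (\<lambda>y. partial i \<rho> y) x\<bar>"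
          using fd_expand[OF pd[of i x]] by simp
        also have "\<dots> \<le> (\<Sum>j\<in>UNIV. \<bar>h$j\<bar> * \<bar>partial j (\<lambda>y. partial i \<rho> y) x\<bar>)"
          by (rule order.trans[OF sum_abs]) (simp add: abs_mult)
        also have "\<dots> \<le> (\<Sum>j\<in>UNIV. norm h * \<bar>partial j (\<lambda>y. partial i \<rho> y) x\<bar>)"
          by (intro sum_mono mult_right_mono) (auto simp: component_le_norm_cart)
        also have "\<dots> = norm h * (\<Sum>j\<in>UNIV. \<bar>partial j (\<lambda>y. partial i \<rho> y) x\<bar>)"
          by (simp add: sum_distrib_left)
        also have "\<dots> \<le> norm h * q x"
          unfolding q_def
          by (intro mult_left_mono member_le_sum[where i = i and f = "\<lambda>i. \<Sum>j\<in>UNIV. \<bar>partial j (\<lambda>y. partial i \<rho> y) x\<bar>"]) (auto intro: sum_nonneg)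
        also have "\<dots> \<le> norm h * B" using m x by (auto simp: B_def intro: mult_left_mono)
        finally show "norm (frechet_derivative (\<lambda>x. partial i \<rho> x) (at x) h) \<le> B * norm h"
          by (simp add: mult.commute)
      qed
    qed
    thus ?thesis by simp
  qed
  define C where "C = real CARD('n) * B + 1"
  have Cpos: "C > 0" using B0 by (simp add: C_def add_nonneg_pos)
  show ?thesis
  proof (intro exI[of _ C] conjI allI impI Cpos)
    fix h :: "real^'n" assume h: "norm h \<le> 1"
    define \<phi> where "\<phi> s = \<rho> (x0 + s *\<^sub>R h)" for s
    have \<phi>d: "(\<phi> has_real_derivative (\<Sum>i\<in>UNIV. h$i * partial i \<rho> (x0 + s *\<^sub>R h))) (at s)" for s
      using dir_deriv_at[OF rd[of "x0 + s *\<^sub>R h"]] fd_expand[OF rd[of "x0 + s *\<^sub>R h"], of h]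
      unfolding \<phi>_def by simp
    obtain \<xi> where \<xi>: "0 < \<xi>" "\<xi> < 1"
      "\<phi> 1 - \<phi> 0 = (1 - 0) * (\<Sum>i\<in>UNIV. h$i * partial i \<rho> (x0 + \<xi> *\<^sub>R h))"
      using MVT2[of 0 1 \<phi> "\<lambda>s. \<Sum>i\<in>UNIV. h$i * partial i \<rho> (x0 + s *\<^sub>R h)"] \<phi>d by auto
    have "\<xi> * norm h \<le> 1 * 1" using \<xi> h by (intro mult_mono) auto
    hence zin: "x0 + \<xi> *\<^sub>R h \<in> cball x0 1" using \<xi> h by (simp add: dist_norm)
    have nz: "norm (x0 + \<xi> *\<^sub>R h - x0) \<le> norm h" using \<xi> mult_left_le_one_le[of "norm h" \<xi>] by simp
    have "\<rho> (x0 + h) - \<rho> x0 - grad \<rho> x0 \<bullet> h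
        = (\<Sum>i\<in>UNIV. h$i * (partial i \<rho> (x0 + \<xi> *\<^sub>R h) - partial i \<rho> x0))"
      using \<xi>(3) by (simp add: \<phi>_def grad_def inner_vec_def sum_subtractf algebra_simps)
    also have "\<dots> \<le> (\<Sum>i\<in>UNIV. \<bar>h$i\<bar> * \<bar>partial i \<rho> (x0 + \<xi> *\<^sub>R h) - partial i \<rho> x0\<bar>)"
      by (intro sum_mono) (simp add: abs_mult[symmetric])
    also have "\<dots> \<le> (\<Sum>i\<in>(UNIV::'n set). norm h * (B * norm h))"
    proof (rule sum_mono)
      fix i :: 'n
      have a: "\<bar>h$i\<bar> \<le> norm h" by (simp add: component_le_norm_cart)
      have "\<bar>partial i \<rho> (x0 + \<xi> *\<^sub>R h) - partial i \<rho> x0\<bar> \<le> B * norm (x0 + \<xi> *\<^sub>R h - x0)"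
        by (rule lip[OF zin])
      also have "\<dots> \<le> B * norm h" using nz B0 by (intro mult_left_mono) auto
      finally have b: "\<bar>partial i \<rho> (x0 + \<xi> *\<^sub>R h) - partial i \<rho> x0\<bar> \<le> B * norm h" .
      show "\<bar>h$i\<bar> * \<bar>partial i \<rho> (x0 + \<xi> *\<^sub>R h) - partial i \<rho> x0\<bar> \<le> norm h * (B * norm h)"
        using a b B0 by (intro mult_mono) auto
    qed
    also have "\<dots> = real CARD('n) * B * (norm h)\<^sup>2" by (simp add: power2_eq_square algebra_simps)
    also have "\<dots> \<le> C * (norm h)\<^sup>2" by (simp add: C_def mult_right_mono)
    finally show "\<rho> (x0 + h) \<le> \<rho> x0 + grad \<rho> x0 \<bullet> h + C * (norm h)\<^sup>2" by simp
  qed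
qed

lemma normal_unit:
  fixes \<rho> :: "real^'n::finite \<Rightarrow> real"
  assumes "grad \<rho> x \<noteq> 0"
  shows "norm (outward_normal \<rho> x) = 1"
  using assms by (simp add: outward_normal_def)

lemma interior_sphere:
  fixes \<rho> :: "real^'n::finite \<Rightarrow> real"
  assumes sdf: "smooth_defining_function \<Omega> \<rho>" and x0: "\<rho> x0 = 0"
  shows "\<exists>t0>0. \<forall>t. 0 < t \<and> t < t0 \<longrightarrow> cball (x0 - t *\<^sub>R outward_normal \<rho> x0) t - {x0} \<subseteq> \<Omega>"
proof -
  have sm: "smooth_on UNIV \<rho>" and Om: "\<Omega> = {x. \<rho> x < 0}" and gn: "grad \<rho> x0 \<noteq> 0"
    using sdf x0 by (auto simp: smooth_defining_function_def)
  define g where "g = grad \<rho> x0"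
  define \<nu> where "\<nu> = outward_normal \<rho> x0"
  have gpos: "norm g > 0" using gn by (simp add: g_def)
  have \<nu>g: "g = norm g *\<^sub>R \<nu>" using gn by (simp add: \<nu>_def outward_normal_def g_def)
  have \<nu>1: "norm \<nu> = 1" using normal_unit[OF gn] by (simp add: \<nu>_def)
  obtain C where C: "C > 0" "\<forall>h. norm h \<le> 1 \<longrightarrow> \<rho> (x0 + h) \<le> \<rho> x0 + g \<bullet> h + C * (norm h)\<^sup>2"
    using taylor_quad[OF sm, of x0] by (auto simp: g_def)
  define t0 where "t0 = min (1/2) (norm g / (2 * C))"
  have t0: "t0 > 0" using C gpos by (simp add: t0_def)
  show ?thesis
  proof (intro exI[of _ t0] conjI allI impI t0 subsetI)
    fix t y assume t: "0 < t \<and> t < t0" and y: "y \<in> cball (x0 - t *\<^sub>R outward_normal \<rho> x0) t - {x0}"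
    define h where "h = y - x0"
    have hne: "h \<noteq> 0" using y by (simp add: h_def)
    have "norm (h + t *\<^sub>R \<nu>) \<le> t" using y by (simp add: h_def \<nu>_def dist_norm norm_minus_commute algebra_simps)
    hence "(norm (h + t *\<^sub>R \<nu>))\<^sup>2 \<le> t\<^sup>2" using t by (intro power_mono) auto
    moreover have "(norm (h + t *\<^sub>R \<nu>))\<^sup>2 = (norm h)\<^sup>2 + 2 * t * (\<nu> \<bullet> h) + t\<^sup>2"
    proof -
      have "(norm (h + t *\<^sub>R \<nu>))\<^sup>2 = (h + t *\<^sub>R \<nu>) \<bullet> (h + t *\<^sub>R \<nu>)" by (rule power2_norm_eq_inner)
      also have "\<dots> = h \<bullet> h + 2 * t * (\<nu> \<bullet> h) + t * t * (\<nu> \<bullet> \<nu>)"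
        by (simp add: inner_add_left inner_add_right inner_commute algebra_simps)
      also have "\<nu> \<bullet> \<nu> = 1" using \<nu>1 by (simp add: power2_norm_eq_inner[symmetric])
      also have "h \<bullet> h = (norm h)\<^sup>2" by (simp add: power2_norm_eq_inner)
      finally show ?thesis by (simp add: power2_eq_square)
    qed
    ultimately have key: "2 * t * (\<nu> \<bullet> h) \<le> - (norm h)\<^sup>2" by linarith
    have nh: "norm h \<le> 2 * t"
    proof -
      have "norm h \<le> norm (h + t *\<^sub>R \<nu>) + norm (t *\<^sub>R \<nu>)" by (metis add_diff_cancel norm_triangle_ineq4)
      also have "\<dots> \<le> t + t" using \<open>norm (h + t *\<^sub>R \<nu>) \<le> t\<close> \<nu>1 t by simp
      finally show ?thesis by simp
    qed
    hence nh1: "norm h \<le> 1" using t by (simp add: t0_def)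
    have "\<rho> y \<le> \<rho> x0 + g \<bullet> h + C * (norm h)\<^sup>2" using C(2) nh1 h_def
      by (metis add.commute diff_add_cancel)
    also have "g \<bullet> h = norm g * (\<nu> \<bullet> h)" by (subst \<nu>g) simp
    finally have r1: "\<rho> y \<le> norm g * (\<nu> \<bullet> h) + C * (norm h)\<^sup>2" using x0 by simp
    have "norm g * (\<nu> \<bullet> h) \<le> norm g * (- (norm h)\<^sup>2 / (2 * t))"
      using key t gpos by (intro mult_left_mono) (auto simp: field_simps)
    moreover have "norm g * (- (norm h)\<^sup>2 / (2 * t)) + C * (norm h)\<^sup>2 = (norm h)\<^sup>2 * (C - norm g / (2 * t))"
      using t by (simp add: field_simps)
    moreover have "C - norm g / (2 * t) < 0"
    proof -
      have "t < norm g / (2 * C)" using t by (simp add: t0_def)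
      hence "t * (2 * C) < norm g" using C by (simp add: field_simps)
      thus ?thesis using t by (simp add: field_simps)
    qed
    moreover have "(norm h)\<^sup>2 > 0" using hne by simp
    ultimately have "\<rho> y < 0" using r1 by (smt (verit) mult_pos_neg)
    thus "y \<in> \<Omega>" using Om by simp
  qed
qed

lemma dir_deriv_inner:
  fixes f :: "real^'n::finite \<Rightarrow> real"
  assumes "(f has_derivative (\<lambda>h. a \<bullet> h)) (at (x + s *\<^sub>R v))"
  shows "((\<lambda>t. f (x + t *\<^sub>R v)) has_real_derivative (a \<bullet> v)) (at s)"
proof -
  have "((\<lambda>t. x + t *\<^sub>R v) has_derivative (\<lambda>t. t *\<^sub>R v)) (at s)"
    by (auto intro!: derivative_eq_intros)
  moreover have "(f has_derivative (\<lambda>h. a \<bullet> h)) (at ((\<lambda>t. x + t *\<^sub>R v) s))"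
    using assms by simp
  ultimately have "((\<lambda>t. f (x + t *\<^sub>R v)) has_derivative (\<lambda>t. a \<bullet> (t *\<^sub>R v))) (at s)"
    by (drule_tac diff_chain_at) (auto simp: o_def)
  moreover have "(\<lambda>t. a \<bullet> (t *\<^sub>R v)) = (\<lambda>t. (a \<bullet> v) * t)" by (auto simp: mult.commute)
  ultimately show ?thesis by (simp add: has_field_derivative_def)
qed

lemma frontier_rho:
  fixes \<rho> :: "real^'n::finite \<Rightarrow> real"
  assumes bsd: "bounded_smooth_domain \<Omega> \<rho>" and x0: "x0 \<in> frontier \<Omega>"
  shows "\<rho> x0 = 0" "grad \<rho> x0 \<noteq> 0"
proof -
  have sm: "smooth_on UNIV \<rho>" and Om: "\<Omega> = {x. \<rho> x < 0}" and op: "open \<Omega>"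
    and gr: "\<forall>x. \<rho> x = 0 \<longrightarrow> grad \<rho> x \<noteq> 0"
    using bsd by (auto simp: bounded_smooth_domain_def smooth_defining_function_def)
  have rc: "continuous_on UNIV \<rho>" using smooth_onD(1)[OF sm] .
  have cl: "closed {x. \<rho> x \<le> 0}"
    using closed_Collect_le[OF rc continuous_on_const] by simp
  have "closure \<Omega> \<subseteq> {x. \<rho> x \<le> 0}"
    by (rule closure_minimal) (use Om cl in auto)
  moreover have "x0 \<in> closure \<Omega>" "x0 \<notin> \<Omega>" using x0 op by (auto simp: frontier_def interior_open)
  ultimately show "\<rho> x0 = 0" using Om by fastforce
  thus "grad \<rho> x0 \<noteq> 0" using gr by simp
qed

lemma interior_contra:
  fixes w :: "real^'n::finite \<Rightarrow> real"
  assumes der: "(w has_derivative (\<lambda>h. a \<bullet> h)) (at x0)"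
    and w0: "w x0 = 0"
    and mx: "d > 0" "\<forall>t. \<bar>t\<bar> < d \<longrightarrow> w (x0 + t *\<^sub>R v) \<le> 0"
    and hop: "k > 0" "t1 > 0" "\<forall>t. 0 < t \<and> t < t1 \<longrightarrow> w (x0 + t *\<^sub>R v) \<le> - k * t"
  shows False
proof -
  have gd: "((\<lambda>t. w (x0 + t *\<^sub>R v)) has_real_derivative (a \<bullet> v)) (at 0)"
    using dir_deriv_inner[of w a x0 0 v] der by simp
  have "a \<bullet> v = 0"
    by (rule DERIV_local_max[OF gd mx(1)]) (use mx(2) w0 in auto)
  hence "((\<lambda>t. w (x0 + t *\<^sub>R v) + k * t) has_real_derivative k) (at 0)"
    using gd by (auto intro!: derivative_eq_intros)
  then obtain e where e: "e > 0" "\<forall>h>0. h < e \<longrightarrow> w (x0 + 0 *\<^sub>R v) + k * 0 < w (x0 + (0 + h) *\<^sub>R v) + k * (0 + h)"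
    using DERIV_pos_inc_right[of _ k 0] hop(1) by blast
  define h where "h = min e t1 / 2"
  have h: "h > 0" "h < e" "h < t1" using e hop by (auto simp: h_def)
  have "0 < w (x0 + h *\<^sub>R v) + k * h" using e(2) h w0 by auto
  moreover have "w (x0 + h *\<^sub>R v) \<le> - k * h" using hop(3) h by auto
  ultimately show False by simp
qed

lemma boundary_contra:
  fixes w c :: "real^'n::finite \<Rightarrow> real" and H :: "real^'n \<Rightarrow> real^'n"
    and D1 D2 :: "'n \<Rightarrow> real^'n \<Rightarrow> real"
  assumes bsd: "bounded_smooth_domain \<Omega> \<rho>" and x0: "x0 \<in> frontier \<Omega>"
    and cont: "continuous_on (closure \<Omega>) w" and w0: "w x0 = 0"
    and der: "\<forall>x\<in>\<Omega>. (w has_derivative (\<lambda>h. H x \<bullet> h)) (at x)"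
    and Hc: "continuous_on (closure \<Omega>) H" and neu: "H x0 \<bullet> outward_normal \<rho> x0 = 0"
    and U: "open U"
    and d1: "\<And>x i. x \<in> U \<Longrightarrow> ((\<lambda>t. w (x + t *\<^sub>R axis i 1)) has_real_derivative D1 i x) (at 0)"
    and d2: "\<And>x i. x \<in> U \<Longrightarrow> ((\<lambda>t. D1 i (x + t *\<^sub>R axis i 1)) has_real_derivative D2 i x) (at 0)"
    and ell: "\<forall>x\<in>U. (\<Sum>i\<in>UNIV. D2 i x) \<ge> c x * w x"
    and cb: "\<forall>x\<in>U. 0 \<le> c x \<and> c x \<le> C"
    and \<delta>: "\<delta> > 0" "\<Omega> \<inter> ball x0 \<delta> \<subseteq> U" "\<forall>x \<in> \<Omega> \<inter> ball x0 \<delta>. w x < 0"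
  shows False
proof -
  have sdf: "smooth_defining_function \<Omega> \<rho>" using bsd by (simp add: bounded_smooth_domain_def)
  have r0: "\<rho> x0 = 0" and gn: "grad \<rho> x0 \<noteq> 0" using frontier_rho[OF bsd x0] by auto
  define \<nu> where "\<nu> = outward_normal \<rho> x0"
  have \<nu>1: "norm \<nu> = 1" using normal_unit[OF gn] by (simp add: \<nu>_def)
  obtain t0 where t0: "t0 > 0" "\<forall>t. 0 < t \<and> t < t0 \<longrightarrow> cball (x0 - t *\<^sub>R \<nu>) t - {x0} \<subseteq> \<Omega>"
    using interior_sphere[OF sdf r0] by (auto simp: \<nu>_def)
  define t where "t = min t0 \<delta> / 3"
  have t: "0 < t" "t < t0" "2 * t < \<delta>" using t0 \<delta> by (auto simp: t_def)
  define y where "y = x0 - t *\<^sub>R \<nu>"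
  have x0c: "x0 \<in> closure \<Omega>" using x0 by (simp add: frontier_def)
  have nx0: "norm (x0 - y) = t" using \<nu>1 t by (simp add: y_def)
  have sub1: "cball y t - {x0} \<subseteq> \<Omega>" using t0(2) t by (simp add: y_def)
  have sub2: "cball y t \<subseteq> ball x0 \<delta>"
  proof
    fix x assume "x \<in> cball y t"
    have "dist x0 y \<le> t" using nx0 by (simp add: dist_norm)
    moreover have "dist y x \<le> t" using \<open>x \<in> cball y t\<close> by simp
    ultimately show "x \<in> ball x0 \<delta>" using t dist_triangle[of x0 x y] by simp
  qed
  have subU: "cball y t - {x0} \<subseteq> U" using sub1 sub2 \<delta>(2) by blast
  have subcl: "cball y t \<subseteq> closure \<Omega>" using sub1 x0c closure_subset by blast
  have x0nb: "x0 \<notin> ball y t" using nx0 by (simp add: dist_norm norm_minus_commute)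
  have neg: "\<forall>x\<in>ball y t. w x < 0"
  proof
    fix x assume xb: "x \<in> ball y t"
    hence "x \<in> cball y t" "x \<noteq> x0" using x0nb by auto
    hence "x \<in> \<Omega>" "x \<in> ball x0 \<delta>" using sub1 sub2 by auto
    thus "w x < 0" using \<delta>(3) by blast
  qed
  obtain k where k: "k > 0" "\<forall>s. 0 < s \<and> s < t/2 \<longrightarrow> w (x0 + (s/t) *\<^sub>R (y - x0)) \<le> - k * s"
    using hopf_core[OF U t(1) nx0 subU continuous_on_subset[OF cont subcl] w0 neg d1 d2 ell cb] by blast
  have ray: "x0 + (s/t) *\<^sub>R (y - x0) = x0 + s *\<^sub>R (- \<nu>)" for s using t by (simp add: y_def)
  have rayin: "x0 + s *\<^sub>R (- \<nu>) \<in> \<Omega>" if "0 < s" "s < 2 * t" for s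
  proof -
    have "x0 + s *\<^sub>R (- \<nu>) - y = (t - s) *\<^sub>R \<nu>" by (simp add: y_def algebra_simps)
    hence "dist y (x0 + s *\<^sub>R (- \<nu>)) = norm ((t - s) *\<^sub>R \<nu>)" by (metis dist_norm dist_commute)
    hence "dist y (x0 + s *\<^sub>R (- \<nu>)) = \<bar>t - s\<bar>" using \<nu>1 by simp
    moreover have "x0 + s *\<^sub>R (- \<nu>) \<noteq> x0" using that \<nu>1 by auto
    ultimately show ?thesis using sub1 that by auto
  qed
  have "continuous_on (closure \<Omega>) (\<lambda>x. H x \<bullet> \<nu>)" using Hc by (intro continuous_intros)
  then obtain \<epsilon> where \<epsilon>: "\<epsilon> > 0" "\<forall>x\<in>closure \<Omega>. dist x x0 < \<epsilon> \<longrightarrow> dist (H x \<bullet> \<nu>) (H x0 \<bullet> \<nu>) < k/2"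
    using x0c k(1) unfolding continuous_on_iff by (meson half_gt_zero)
  define s where "s = min (t/2) \<epsilon> / 2"
  have s: "0 < s" "s < t/2" "s < \<epsilon>" using t \<epsilon> by (auto simp: s_def)
  define \<phi> where "\<phi> \<sigma> = w (x0 + \<sigma> *\<^sub>R (- \<nu>))" for \<sigma>
  have pd: "(\<phi> has_real_derivative (H (x0 + \<sigma> *\<^sub>R (- \<nu>)) \<bullet> (- \<nu>))) (at \<sigma>)" if "0 < \<sigma>" "\<sigma> < s" for \<sigma>
    unfolding \<phi>_def
    by (rule dir_deriv_inner) (use der rayin[of \<sigma>] that s in auto)
  have pc: "continuous_on {0..s} \<phi>"
  proof -
    have "(\<lambda>\<sigma>. x0 + \<sigma> *\<^sub>R (- \<nu>)) ` {0..s} \<subseteq> closure \<Omega>"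
    proof
      fix p assume "p \<in> (\<lambda>\<sigma>. x0 + \<sigma> *\<^sub>R (- \<nu>)) ` {0..s}"
      then obtain \<sigma> where "\<sigma> \<in> {0..s}" "p = x0 + \<sigma> *\<^sub>R (- \<nu>)" by blast
      thus "p \<in> closure \<Omega>" using rayin[of \<sigma>] s x0c closure_subset
        by (cases "\<sigma> = 0") auto
    qed
    thus ?thesis unfolding \<phi>_def
      by (intro continuous_on_compose2[OF cont]) (auto intro!: continuous_intros)
  qed
  obtain l z where lz: "0 < z" "z < s" "DERIV \<phi> z :> l" "\<phi> s - \<phi> 0 = (s - 0) * l"
    using MVT[OF s(1) pc] pd by (meson real_differentiable_def)
  have "l = H (x0 + z *\<^sub>R (- \<nu>)) \<bullet> (- \<nu>)" using DERIV_unique[OF lz(3) pd[OF lz(1,2)]] .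
  moreover have "dist (H (x0 + z *\<^sub>R (- \<nu>)) \<bullet> \<nu>) (H x0 \<bullet> \<nu>) < k/2"
  proof -
    have pz: "x0 + z *\<^sub>R (- \<nu>) \<in> closure \<Omega>" using rayin[of z] lz s closure_subset by auto
    have "dist (x0 + z *\<^sub>R (- \<nu>)) x0 < \<epsilon>" using \<nu>1 lz s by (simp add: dist_norm)
    thus ?thesis using \<epsilon>(2) pz by blast
  qed
  ultimately have "l > - k/2" using neu by (simp add: \<nu>_def dist_norm)
  hence "l * s > (- k/2) * s" using s by (intro mult_strict_right_mono) auto
  hence "\<phi> s > - k/2 * s" using lz(4) s w0 by (simp add: \<phi>_def mult.commute)
  moreover have "\<phi> s \<le> - k * s" using k(2) s ray by (simp add: \<phi>_def)
  moreover have "0 < k * s" using k(1) s(1) by simp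
  moreover have "- k/2 * s = - (k * s) / 2" by simp
  ultimately show False by linarith
qed

lemma smp:
  fixes w c :: "real^'n::finite \<Rightarrow> real" and H :: "real^'n \<Rightarrow> real^'n"
    and D1 D2 :: "'n \<Rightarrow> real^'n \<Rightarrow> real"
  assumes bsd: "bounded_smooth_domain \<Omega> \<rho>"
    and cont: "continuous_on (closure \<Omega>) w"
    and der: "\<forall>x\<in>\<Omega>. (w has_derivative (\<lambda>h. H x \<bullet> h)) (at x)"
    and Hc: "continuous_on (closure \<Omega>) H" and neu: "\<forall>x\<in>frontier \<Omega>. H x \<bullet> outward_normal \<rho> x = 0"
    and d1: "\<And>x i. x \<in> \<Omega> \<Longrightarrow> ((\<lambda>t. w (x + t *\<^sub>R axis i 1)) has_real_derivative D1 i x) (at 0)"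
    and d2: "\<And>x i. x \<in> \<Omega> \<Longrightarrow> ((\<lambda>t. D1 i (x + t *\<^sub>R axis i 1)) has_real_derivative D2 i x) (at 0)"
    and ell: "\<forall>x\<in>\<Omega>. (\<Sum>i\<in>UNIV. D2 i x) \<ge> c x * w x"
    and cb: "\<forall>x\<in>\<Omega>. 0 \<le> c x \<and> c x \<le> C"
    and le: "\<forall>x\<in>closure \<Omega>. w x \<le> 0" and ex: "\<exists>x\<in>closure \<Omega>. w x = 0"
  shows "\<forall>x\<in>closure \<Omega>. w x = 0"
proof -
  have op: "open \<Omega>" and conn: "connected \<Omega>" using bsd by (auto simp: bounded_smooth_domain_def)
  have contO: "continuous_on \<Omega> w" using cont closure_subset continuous_on_subset by blast
  define Z where "Z = {x\<in>\<Omega>. w x = 0}"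
  define N where "N = {x\<in>\<Omega>. w x < 0}"
  have Zne: "Z \<noteq> {}"
  proof
    assume Z0: "Z = {}"
    obtain x0 where x0: "x0 \<in> closure \<Omega>" "w x0 = 0" using ex by blast
    have "x0 \<notin> \<Omega>" using Z0 x0 by (auto simp: Z_def)
    hence fx: "x0 \<in> frontier \<Omega>" using x0 op by (simp add: frontier_def interior_open)
    have neg: "\<forall>x \<in> \<Omega> \<inter> ball x0 1. w x < 0"
      using Z0 le closure_subset by (force simp: Z_def less_le)
    show False
      by (rule boundary_contra[OF bsd fx cont x0(2) der Hc _ op d1 d2 ell cb, of 1])
         (use neu fx neg in auto)
  qed
  have Zo: "open Z"
  proof (unfold open_contains_ball, intro ballI)
    fix z assume zZ: "z \<in> Z"
    hence "z \<in> \<Omega>" by (simp add: Z_def)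
    then obtain r2 where r2: "r2 > 0" "cball z r2 \<subseteq> \<Omega>" using op open_contains_cball by blast
    define r where "r = r2 / 2"
    have r: "r > 0" "cball z (2*r) \<subseteq> \<Omega>" using r2 by (auto simp: r_def)
    have "ball z r \<subseteq> Z"
    proof
      fix p assume p: "p \<in> ball z r"
      show "p \<in> Z"
      proof (rule ccontr)
        assume "p \<notin> Z"
        have pO: "p \<in> \<Omega>" using p r by auto
        hence wp: "w p < 0" using \<open>p \<notin> Z\<close> le closure_subset by (force simp: Z_def less_le)
        define K where "K = {x \<in> cball z (2*r). w x = 0}"
        have Kc: "closed K" unfolding K_def
          by (rule continuous_closed_preimage_constant) (use contO r in \<open>auto intro: continuous_on_subset\<close>)
        have zK: "z \<in> K" using zZ r by (auto simp: K_def Z_def)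
        obtain x0 where x0: "x0 \<in> K" "\<And>y. y \<in> K \<Longrightarrow> dist p x0 \<le> dist p y"
          using distance_attains_inf[OF Kc] zK by blast
        define d where "d = dist p x0"
        have dz: "d \<le> dist p z" using x0(2)[OF zK] by (simp add: d_def)
        have dr: "d < r" using dz p by (simp add: dist_commute)
        have w0: "w x0 = 0" using x0(1) by (simp add: K_def)
        have dpos: "d > 0" using wp w0 by (auto simp: d_def)
        have cb_sub: "cball p d \<subseteq> cball z (2*r)"
        proof
          fix x assume "x \<in> cball p d"
          hence "dist z x \<le> dist z p + dist p x" "dist p x \<le> d" by (auto intro: dist_triangle)
          thus "x \<in> cball z (2*r)" using p dr by (simp add: dist_commute)
        qed
        have x0O: "x0 \<in> \<Omega>" using x0(1) r by (auto simp: K_def)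
        have negb: "\<forall>x\<in>ball p d. w x < 0"
        proof
          fix x assume xb: "x \<in> ball p d"
          hence xc: "x \<in> cball z (2*r)" using cb_sub by (meson ball_subset_cball subsetD)
          have "w x \<le> 0" using le xc r closure_subset by blast
          moreover have "w x \<noteq> 0"
          proof
            assume "w x = 0"
            hence "x \<in> K" using xc by (simp add: K_def)
            from x0(2)[OF this] xb show False by (simp add: d_def)
          qed
          ultimately show "w x < 0" by simp
        qed
        have nx0: "norm (x0 - p) = d" by (simp add: d_def dist_norm norm_minus_commute)
        have subU: "cball p d - {x0} \<subseteq> \<Omega>" using cb_sub r by blast
        have contb: "continuous_on (cball p d) w"
          using contO cb_sub r continuous_on_subset by blast
        obtain k where k: "k > 0" "\<forall>t. 0 < t \<and> t < d/2 \<longrightarrow> w (x0 + (t/d) *\<^sub>R (p - x0)) \<le> - k * t"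
          using hopf_core[OF op dpos nx0 subU contb w0 negb d1 d2 ell cb] by blast
        define v where "v = (1/d) *\<^sub>R (p - x0)"
        have nv: "norm v = 1" using dpos nx0 by (simp add: v_def norm_minus_commute)
        obtain e where e: "e > 0" "ball x0 e \<subseteq> \<Omega>" using op x0O open_contains_ball by blast
        have mx: "\<forall>t. \<bar>t\<bar> < e \<longrightarrow> w (x0 + t *\<^sub>R v) \<le> 0"
        proof (intro allI impI)
          fix t :: real assume "\<bar>t\<bar> < e"
          hence "x0 + t *\<^sub>R v \<in> ball x0 e" using nv by (simp add: dist_norm)
          thus "w (x0 + t *\<^sub>R v) \<le> 0" using e le closure_subset by blast
        qed
        have hop: "\<forall>t. 0 < t \<and> t < d/2 \<longrightarrow> w (x0 + t *\<^sub>R v) \<le> - k * t"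
          using k(2) by (simp add: v_def)
        show False
          by (rule interior_contra[OF _ w0 e(1) mx k(1) _ hop]) (use der x0O dpos in auto)
      qed
    qed
    thus "\<exists>e>0. ball z e \<subseteq> Z" using r by blast
  qed
  have No: "open N"
  proof -
    have "open (\<Omega> \<inter> w -` {..<0})" by (rule continuous_open_preimage[OF contO op]) auto
    moreover have "\<Omega> \<inter> w -` {..<0} = N" by (auto simp: N_def)
    ultimately show ?thesis by simp
  qed
  have "Z \<inter> \<Omega> = {} \<or> N \<inter> \<Omega> = {}"
    by (rule connectedD[OF conn Zo No]) (use le closure_subset in \<open>force simp: Z_def N_def less_le\<close>)+
  hence N0: "N = {}" using Zne by (auto simp: Z_def N_def)
  have wO: "w x = 0" if "x \<in> \<Omega>" for x
    using N0 le closure_subset that by (force simp: N_def less_le)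
  show ?thesis
  proof
    fix x assume "x \<in> closure \<Omega>"
    have a: "w x \<le> 0" by (rule continuous_le_on_closure[OF cont \<open>x \<in> closure \<Omega>\<close>]) (use wO in simp)
    have b: "0 \<le> w x" by (rule continuous_ge_on_closure[OF cont \<open>x \<in> closure \<Omega>\<close>]) (use wO in simp)
    show "w x = 0" using a b by linarith
  qed
qed

lemma holder_cont:
  fixes f :: "real^'n::finite \<Rightarrow> real"
  assumes "holder_on A f"
  shows "continuous_on A f"
proof -
  obtain \<alpha> C where a: "0 < \<alpha>" "\<alpha> \<le> 1" and hC: "\<forall>x\<in>A. \<forall>y\<in>A. \<bar>f x - f y\<bar> \<le> C * dist x y powr \<alpha>"
    using assms by (auto simp: holder_on_def)
  show ?thesis unfolding continuous_on_iff
  proof (intro ballI allI impI)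
    fix x e assume x: "x \<in> A" and e: "(0::real) < e"
    define d where "d = (e / (\<bar>C\<bar> + 1)) powr (1/\<alpha>)"
    have ep: "e / (\<bar>C\<bar> + 1) > 0" using e by simp
    have d: "d > 0" unfolding d_def by (rule powr_gt_zero[THEN iffD2]) (use ep in linarith)
    have dpow: "d powr \<alpha> = e / (\<bar>C\<bar> + 1)" using ep a e by (simp add: d_def powr_powr less_imp_le)
    show "\<exists>d>0. \<forall>x'\<in>A. dist x' x < d \<longrightarrow> dist (f x') (f x) < e"
    proof (intro exI[of _ d] conjI d ballI impI)
      fix y assume y: "y \<in> A" "dist y x < d"
      have "dist y x powr \<alpha> \<le> d powr \<alpha>" using y a by (intro powr_mono2) auto
      have "\<bar>f y - f x\<bar> \<le> C * dist y x powr \<alpha>" using hC x y by auto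
      also have "\<dots> \<le> (\<bar>C\<bar> + 1) * dist y x powr \<alpha>" by (intro mult_right_mono) auto
      also have "\<dots> < (\<bar>C\<bar> + 1) * (e / (\<bar>C\<bar> + 1))"
      proof (cases "dist y x = 0")
        case True thus ?thesis using e by simp
      next
        case False
        hence "dist y x powr \<alpha> < d powr \<alpha>" using y a by (intro powr_less_mono2) auto
        thus ?thesis using dpow by (intro mult_strict_left_mono) auto
      qed
      also have "\<dots> = e" by simp
      finally show "dist (f y) (f x) < e" by (simp add: dist_real_def)
    qed
  qed
qed

lemma nc_data:
  fixes f :: "real^'n::finite \<Rightarrow> real"
  assumes nc: "neumann_classical \<Omega> \<rho> f" and op: "open \<Omega>"
  shows "\<exists>G. continuous_on (closure \<Omega>) G \<and> (\<forall>x\<in>frontier \<Omega>. G x \<bullet> outward_normal \<rho> x = 0)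
    \<and> (\<forall>x\<in>\<Omega>. (f has_derivative (\<lambda>h. G x \<bullet> h)) (at x))
    \<and> (\<forall>x\<in>\<Omega>. \<forall>i. ((\<lambda>t. f (x + t *\<^sub>R axis i 1)) has_real_derivative partial i f x) (at 0))
    \<and> (\<forall>x\<in>\<Omega>. \<forall>i. ((\<lambda>t. partial i f (x + t *\<^sub>R axis i 1)) has_real_derivative partial i (\<lambda>y. partial i f y) x) (at 0))"
proof -
  obtain G where G: "continuous_on (closure \<Omega>) G" "\<forall>x\<in>\<Omega>. G x = grad f x"
    "\<forall>x\<in>frontier \<Omega>. G x \<bullet> outward_normal \<rho> x = 0"
    using nc by (auto simp: neumann_classical_def)
  have c2: "C2_on \<Omega> f" using nc by (simp add: neumann_classical_def)
  have fd: "f differentiable (at x)" if "x \<in> \<Omega>" for x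
    using c2 op that by (auto simp: C2_on_def differentiable_on_eq_differentiable_at)
  have pd: "(\<lambda>x. partial i f x) differentiable (at x)" if "x \<in> \<Omega>" for x i
    using c2 op that by (auto simp: C2_on_def differentiable_on_eq_differentiable_at)
  have hd: "(f has_derivative (\<lambda>h. G x \<bullet> h)) (at x)" if "x \<in> \<Omega>" for x
  proof -
    have "(f has_derivative frechet_derivative f (at x)) (at x)" using fd[OF that] frechet_derivative_works by blast
    moreover have "frechet_derivative f (at x) = (\<lambda>h. G x \<bullet> h)"
      using grad_inner[OF fd[OF that]] G(2) that by auto
    ultimately show ?thesis by simp
  qed
  show ?thesis
  proof (intro exI[of _ G] conjI G(1) G(3) ballI allI)
    fix x assume "x \<in> \<Omega>" thus "(f has_derivative (\<lambda>h. G x \<bullet> h)) (at x)" by (rule hd)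
  next
    fix x i assume x: "x \<in> \<Omega>"
    show "((\<lambda>t. f (x + t *\<^sub>R axis i 1)) has_real_derivative partial i f x) (at 0)"
      using dir_deriv[OF fd[OF x], of "axis i 1"] by (simp add: partial_def)
    show "((\<lambda>t. partial i f (x + t *\<^sub>R axis i 1)) has_real_derivative partial i (\<lambda>y. partial i f y) x) (at 0)"
      using dir_deriv[OF pd[OF x, of i], of "axis i 1"] by (simp add: partial_def)
  qed
qed

lemma int_upper:
  fixes f :: "real^'n::finite \<Rightarrow> real"
  assumes L: "\<Omega> \<in> lmeasurable" and I: "integral \<Omega> f = N" and N: "N > 0" and le: "\<forall>x\<in>\<Omega>. f x \<le> T"
  shows "N \<le> T * measure lebesgue \<Omega>"
proof -
  have fi: "f integrable_on \<Omega>" using I N not_integrable_integral by fastforce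
  have "N \<le> integral \<Omega> (\<lambda>x. T)" unfolding I[symmetric]
    by (rule integral_le[OF fi integrable_on_const[OF L]]) (use le in auto)
  also have "integral \<Omega> (\<lambda>x. T) = T * measure lebesgue \<Omega>"
    using integral_mult_right[of \<Omega> T "\<lambda>x. 1"] lmeasure_integral[OF L] by simp
  finally show ?thesis .
qed

lemma int_lower:
  fixes f :: "real^'n::finite \<Rightarrow> real"
  assumes L: "\<Omega> \<in> lmeasurable" and I: "integral \<Omega> f = N" and N: "N > 0" and le: "\<forall>x\<in>\<Omega>. T \<le> f x"
  shows "T * measure lebesgue \<Omega> \<le> N"
proof -
  have fi: "f integrable_on \<Omega>" using I N not_integrable_integral by fastforce
  have "integral \<Omega> (\<lambda>x. T) \<le> N" unfolding I[symmetric]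
    by (rule integral_le[OF integrable_on_const[OF L] fi]) (use le in auto)
  moreover have "integral \<Omega> (\<lambda>x. T) = T * measure lebesgue \<Omega>"
    using integral_mult_right[of \<Omega> T "\<lambda>x. 1"] lmeasure_integral[OF L] by simp
  ultimately show ?thesis by simp
qed

theorem lemma5p3:
  fixes \<Omega> :: "(real^'n::finite) set" and \<rho> :: "real^'n \<Rightarrow> real"
    and \<beta> \<gamma> S I :: "real^'n \<Rightarrow> real" and N q p dS dI :: real
  assumes "bounded_smooth_domain \<Omega> \<rho>"
    and "\<forall>x\<in>closure \<Omega>. \<beta> x > 0" and "\<forall>x\<in>closure \<Omega>. \<gamma> x > 0"
    and "holder_on (closure \<Omega>) \<beta>" and "holder_on (closure \<Omega>) \<gamma>"
    and "N > 0" and "q > 0" and "0 < p" and "p < 1" and "dS > 0" and "dI > 0"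
    and "endemic_equilibrium \<Omega> \<rho> dS dI \<beta> \<gamma> N q p S I"
  shows "\<exists>\<kappa>>0. (\<forall>x\<in>closure \<Omega>. dS * S x + dI * I x = \<kappa>) \<and>
     (\<forall>M. M > 0 \<and> N / measure lebesgue \<Omega> =
            M + (Sup ((\<lambda>x. \<gamma> x / \<beta> x) ` closure \<Omega>)) powr (1 / q) * M powr ((1 - p) / q)
          \<longrightarrow> \<kappa> / dI \<ge> M) \<and>
     (dS \<le> dI \<longrightarrow> \<kappa> / dI \<le> N / measure lebesgue \<Omega>)"
proof -
  note bsd = assms(1)
  have \<beta>pos: "\<forall>x\<in>closure \<Omega>. \<beta> x > 0" and \<gamma>pos: "\<forall>x\<in>closure \<Omega>. \<gamma> x > 0"
    and N0: "N > 0" and q0: "q > 0" and p0: "0 < p" and p1: "p < 1" and dS0: "dS > 0" and dI0: "dI > 0"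
    using assms(2,3,6-11) by blast+
  have \<beta>c: "continuous_on (closure \<Omega>) \<beta>" using holder_cont assms(4) by blast
  have \<gamma>c: "continuous_on (closure \<Omega>) \<gamma>" using holder_cont assms(5) by blast
  have op: "open \<Omega>" and bdd: "bounded \<Omega>" and ne: "\<Omega> \<noteq> {}"
    using bsd by (auto simp: bounded_smooth_domain_def)
  have cpt: "compact (closure \<Omega>)" using bdd by (simp add: compact_closure)
  have clne: "closure \<Omega> \<noteq> {}" using ne by simp
  have L: "\<Omega> \<in> lmeasurable" using lmeasurable_open[OF bdd op] .
  have ncS: "neumann_classical \<Omega> \<rho> S" and ncI: "neumann_classical \<Omega> \<rho> I"
    and nonneg: "\<forall>x\<in>closure \<Omega>. S x \<ge> 0 \<and> I x \<ge> 0" and Inz: "\<exists>x\<in>\<Omega>. I x \<noteq> 0"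
    and eqS: "\<forall>x\<in>\<Omega>. dS * laplacian S x - \<beta> x * S x powr q * I x powr p + \<gamma> x * I x = 0"
    and eqI: "\<forall>x\<in>\<Omega>. dI * laplacian I x + \<beta> x * S x powr q * I x powr p - \<gamma> x * I x = 0"
    and intN: "integral \<Omega> (\<lambda>x. S x + I x) = N"
    using assms(12) by (auto simp: endemic_equilibrium_def)
  have Sc: "continuous_on (closure \<Omega>) S" and Ic: "continuous_on (closure \<Omega>) I"
    using ncS ncI by (auto simp: neumann_classical_def)
  obtain GS where GS: "continuous_on (closure \<Omega>) GS" "\<forall>x\<in>frontier \<Omega>. GS x \<bullet> outward_normal \<rho> x = 0"
    "\<forall>x\<in>\<Omega>. (S has_derivative (\<lambda>h. GS x \<bullet> h)) (at x)"
    "\<forall>x\<in>\<Omega>. \<forall>i. ((\<lambda>t. S (x + t *\<^sub>R axis i 1)) has_real_derivative partial i S x) (at 0)"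
    "\<forall>x\<in>\<Omega>. \<forall>i. ((\<lambda>t. partial i S (x + t *\<^sub>R axis i 1)) has_real_derivative partial i (\<lambda>y. partial i S y) x) (at 0)"
    using nc_data[OF ncS op] by blast
  obtain GI where GI: "continuous_on (closure \<Omega>) GI" "\<forall>x\<in>frontier \<Omega>. GI x \<bullet> outward_normal \<rho> x = 0"
    "\<forall>x\<in>\<Omega>. (I has_derivative (\<lambda>h. GI x \<bullet> h)) (at x)"
    "\<forall>x\<in>\<Omega>. \<forall>i. ((\<lambda>t. I (x + t *\<^sub>R axis i 1)) has_real_derivative partial i I x) (at 0)"
    "\<forall>x\<in>\<Omega>. \<forall>i. ((\<lambda>t. partial i I (x + t *\<^sub>R axis i 1)) has_real_derivative partial i (\<lambda>y. partial i I y) x) (at 0)"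
    using nc_data[OF ncI op] by blast
  define f where "f x = \<beta> x * S x powr q * I x powr p - \<gamma> x * I x" for x
  have lapS: "dS * laplacian S x = f x" if "x \<in> \<Omega>" for x using eqS that by (auto simp: f_def)
  have lapI: "dI * laplacian I x = - f x" if "x \<in> \<Omega>" for x using eqI that by (auto simp: f_def)
  have lap_sum: "laplacian g x = (\<Sum>i\<in>UNIV. partial i (\<lambda>y. partial i g y) x)" for g :: "real^'n \<Rightarrow> real" and x
    by (simp add: laplacian_def)
  define u where "u x = dS * S x + dI * I x" for x
  have uc: "continuous_on (closure \<Omega>) u" unfolding u_def using Sc Ic by (intro continuous_intros)
  obtain xm where xm: "xm \<in> closure \<Omega>" "\<forall>x\<in>closure \<Omega>. u x \<le> u xm"
    using continuous_attains_sup[OF cpt clne uc] by blast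
  define \<kappa> where "\<kappa> = u xm"
  have uconst: "\<forall>x\<in>closure \<Omega>. u x = \<kappa>"
  proof -
    define w where "w x = u x - \<kappa>" for x
    define H where "H x = dS *\<^sub>R GS x + dI *\<^sub>R GI x" for x
    define D1 where "D1 i x = dS * partial i S x + dI * partial i I x" for i x
    define D2 where "D2 i x = dS * partial i (\<lambda>y. partial i S y) x + dI * partial i (\<lambda>y. partial i I y) x" for i x
    have wc: "continuous_on (closure \<Omega>) w" unfolding w_def using uc by (intro continuous_intros)
    have wd: "\<forall>x\<in>\<Omega>. (w has_derivative (\<lambda>h. H x \<bullet> h)) (at x)"
    proof
      fix x assume x: "x \<in> \<Omega>"
      have "((\<lambda>x. dS * S x + dI * I x - \<kappa>) has_derivative (\<lambda>h. dS * (GS x \<bullet> h) + dI * (GI x \<bullet> h) - 0)) (at x)"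
        using GS(3) GI(3) x by (intro derivative_intros) auto
      moreover have "(\<lambda>h. dS * (GS x \<bullet> h) + dI * (GI x \<bullet> h) - 0) = (\<lambda>h. H x \<bullet> h)"
        by (auto simp: H_def inner_add_left)
      moreover have "w = (\<lambda>x. dS * S x + dI * I x - \<kappa>)" by (simp add: w_def u_def fun_eq_iff)
      ultimately show "(w has_derivative (\<lambda>h. H x \<bullet> h)) (at x)" by simp
    qed
    have Hc: "continuous_on (closure \<Omega>) H" unfolding H_def using GS(1) GI(1) by (intro continuous_intros)
    have neu: "\<forall>x\<in>frontier \<Omega>. H x \<bullet> outward_normal \<rho> x = 0"
      using GS(2) GI(2) by (simp add: H_def inner_add_left)
    have d1: "((\<lambda>t. w (x + t *\<^sub>R axis i 1)) has_real_derivative D1 i x) (at 0)" if "x \<in> \<Omega>" for x i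
      unfolding w_def u_def D1_def using GS(4) GI(4) that by (auto intro!: derivative_eq_intros)
    have d2: "((\<lambda>t. D1 i (x + t *\<^sub>R axis i 1)) has_real_derivative D2 i x) (at 0)" if "x \<in> \<Omega>" for x i
      unfolding D1_def D2_def using GS(5) GI(5) that by (auto intro!: derivative_eq_intros)
    have ell: "\<forall>x\<in>\<Omega>. (\<Sum>i\<in>UNIV. D2 i x) \<ge> (\<lambda>_. 0) x * w x"
    proof
      fix x assume x: "x \<in> \<Omega>"
      have "(\<Sum>i\<in>UNIV. D2 i x) = dS * laplacian S x + dI * laplacian I x"
        by (simp add: D2_def lap_sum sum.distrib sum_distrib_left)
      also have "\<dots> = 0" using lapS[OF x] lapI[OF x] by simp
      finally show "(\<Sum>i\<in>UNIV. D2 i x) \<ge> (\<lambda>_. 0) x * w x" by simp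
    qed
    have cb: "\<forall>x\<in>\<Omega>. 0 \<le> (\<lambda>_. 0::real) x \<and> (\<lambda>_. 0::real) x \<le> 0" by simp
    have le: "\<forall>x\<in>closure \<Omega>. w x \<le> 0" using xm by (simp add: w_def \<kappa>_def)
    have ex: "\<exists>x\<in>closure \<Omega>. w x = 0" using xm by (auto simp: w_def \<kappa>_def)
    have "\<forall>x\<in>closure \<Omega>. w x = 0"
      by (rule smp[OF bsd wc wd Hc neu d1 d2 ell cb le ex])
    thus ?thesis by (simp add: w_def)
  qed
  have kpos: "\<kappa> > 0"
  proof -
    obtain x where x: "x \<in> \<Omega>" "I x \<noteq> 0" using Inz by blast
    have xc: "x \<in> closure \<Omega>" using x closure_subset by blast
    have "S x \<ge> 0" "I x > 0" using nonneg xc x(2) by force+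
    hence "u x > 0" using dS0 dI0 by (simp add: u_def add_nonneg_pos)
    thus ?thesis using uconst xc by simp
  qed
  define K where "K = \<kappa> / dI"
  have IK: "I x \<le> K" if "x \<in> closure \<Omega>" for x
  proof -
    have "dS * S x \<ge> 0" using nonneg that dS0 by simp
    moreover have "dS * S x + dI * I x = \<kappa>" using uconst that by (simp add: u_def)
    ultimately have "dI * I x \<le> \<kappa>" by linarith
    thus ?thesis using dI0 by (simp add: K_def field_simps)
  qed
  have K0: "K > 0" using kpos dI0 by (simp add: K_def)
  obtain C\<gamma> where C\<gamma>: "\<forall>x\<in>closure \<Omega>. \<gamma> x \<le> C\<gamma>"
    using continuous_attains_sup[OF cpt clne \<gamma>c] by blast
  have Ipos: "\<forall>x\<in>closure \<Omega>. I x > 0"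
  proof (rule ccontr)
    assume "\<not> (\<forall>x\<in>closure \<Omega>. I x > 0)"
    then obtain x0 where x0: "x0 \<in> closure \<Omega>" "I x0 = 0" using nonneg by (force simp: less_le)
    define w where "w x = - I x" for x
    define H where "H x = - GI x" for x
    define D1 where "D1 i x = - partial i I x" for i x
    define D2 where "D2 i x = - partial i (\<lambda>y. partial i I y) x" for i x
    define c where "c x = \<gamma> x / dI" for x
    have wc: "continuous_on (closure \<Omega>) w" unfolding w_def using Ic by (intro continuous_intros)
    have wd: "\<forall>x\<in>\<Omega>. (w has_derivative (\<lambda>h. H x \<bullet> h)) (at x)"
    proof
      fix x assume x: "x \<in> \<Omega>"
      have "((\<lambda>x. - I x) has_derivative (\<lambda>h. - (GI x \<bullet> h))) (at x)"
        using GI(3) x by (intro derivative_intros) auto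
      moreover have "w = (\<lambda>x. - I x)" by (simp add: w_def fun_eq_iff)
      ultimately show "(w has_derivative (\<lambda>h. H x \<bullet> h)) (at x)" by (simp add: H_def)
    qed
    have Hc: "continuous_on (closure \<Omega>) H" unfolding H_def using GI(1) by (intro continuous_intros)
    have neu: "\<forall>x\<in>frontier \<Omega>. H x \<bullet> outward_normal \<rho> x = 0"
      using GI(2) by (simp add: H_def)
    have d1: "((\<lambda>t. w (x + t *\<^sub>R axis i 1)) has_real_derivative D1 i x) (at 0)" if "x \<in> \<Omega>" for x i
      unfolding w_def D1_def using GI(4) that by (auto intro!: derivative_eq_intros)
    have d2: "((\<lambda>t. D1 i (x + t *\<^sub>R axis i 1)) has_real_derivative D2 i x) (at 0)" if "x \<in> \<Omega>" for x i
      unfolding D1_def D2_def using GI(5) that by (auto intro!: derivative_eq_intros)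
    have ell: "\<forall>x\<in>\<Omega>. (\<Sum>i\<in>UNIV. D2 i x) \<ge> c x * w x"
    proof
      fix x assume x: "x \<in> \<Omega>"
      have xc: "x \<in> closure \<Omega>" using x closure_subset by blast
      have "(\<Sum>i\<in>UNIV. D2 i x) = - laplacian I x"
        by (simp add: D2_def lap_sum sum_negf)
      also have "\<dots> = f x / dI" using lapI[OF x] dI0 by (simp add: field_simps)
      also have "\<dots> \<ge> c x * w x"
      proof -
        have "\<beta> x > 0" using \<beta>pos xc by simp
        hence "\<beta> x * S x powr q * I x powr p \<ge> 0" by (intro mult_nonneg_nonneg) auto
        hence "f x \<ge> - \<gamma> x * I x" by (simp add: f_def)
        hence "f x / dI \<ge> (- \<gamma> x * I x) / dI" using dI0 by (intro divide_right_mono) auto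
        thus ?thesis by (simp add: c_def w_def)
      qed
      finally show "(\<Sum>i\<in>UNIV. D2 i x) \<ge> c x * w x" .
    qed
    have cb: "\<forall>x\<in>\<Omega>. 0 \<le> c x \<and> c x \<le> C\<gamma> / dI"
    proof
      fix x assume "x \<in> \<Omega>"
      hence xc: "x \<in> closure \<Omega>" using closure_subset by blast
      have "0 < \<gamma> x" "\<gamma> x \<le> C\<gamma>" using \<gamma>pos C\<gamma> xc by auto
      thus "0 \<le> c x \<and> c x \<le> C\<gamma> / dI" using dI0 by (auto simp: c_def intro: divide_right_mono)
    qed
    have le: "\<forall>x\<in>closure \<Omega>. w x \<le> 0" using nonneg by (simp add: w_def)
    have ex: "\<exists>x\<in>closure \<Omega>. w x = 0" using x0 by (auto simp: w_def)
    have "\<forall>x\<in>closure \<Omega>. w x = 0"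
      by (rule smp[OF bsd wc wd Hc neu d1 d2 ell cb le ex])
    thus False using Inz closure_subset by (force simp: w_def)
  qed
  define Rs where "Rs = Sup ((\<lambda>x. \<gamma> x / \<beta> x) ` closure \<Omega>)"
  have rbdd: "bdd_above ((\<lambda>x. \<gamma> x / \<beta> x) ` closure \<Omega>)"
  proof -
    have "continuous_on (closure \<Omega>) (\<lambda>x. \<gamma> x / \<beta> x)"
      using \<gamma>c \<beta>c \<beta>pos by (intro continuous_intros) auto
    from compact_continuous_image[OF this cpt] show ?thesis
      by (intro bounded_imp_bdd_above compact_imp_bounded)
  qed
  have rle: "\<gamma> x / \<beta> x \<le> Rs" if "x \<in> closure \<Omega>" for x
    unfolding Rs_def by (rule cSup_upper) (use that rbdd in auto)
  have Rs0: "Rs > 0"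
  proof -
    obtain x0 where "x0 \<in> \<Omega>" using ne by blast
    hence x: "x0 \<in> closure \<Omega>" using closure_subset by blast
    have "0 < \<gamma> x0 / \<beta> x0" using \<beta>pos \<gamma>pos x by simp
    thus ?thesis using rle[OF x] by linarith
  qed
  have Sb: "\<forall>x\<in>closure \<Omega>. S x \<le> Rs powr (1/q) * K powr ((1 - p)/q)"
  proof -
    obtain x1 where x1: "x1 \<in> closure \<Omega>" "\<forall>x\<in>closure \<Omega>. S x \<le> S x1"
      using continuous_attains_sup[OF cpt clne Sc] by blast
    have I1: "I x1 > 0" using Ipos x1 by blast
    have S1: "S x1 \<ge> 0" using nonneg x1 by blast
    have fx1: "f x1 \<le> 0"
    proof (rule ccontr)
      assume "\<not> f x1 \<le> 0"
      hence fpos: "f x1 > 0" by simp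
      have S1pos: "S x1 > 0"
      proof (rule ccontr)
        assume "\<not> S x1 > 0"
        hence "S x1 = 0" using S1 by simp
        hence "f x1 = - \<gamma> x1 * I x1" by (simp add: f_def)
        moreover have "\<gamma> x1 > 0" using \<gamma>pos x1 by blast
        hence "\<gamma> x1 * I x1 > 0" using I1 by simp
        ultimately show False using fpos by linarith
      qed
      let ?F = "at x1 within closure \<Omega>"
      have tS: "(S \<longlongrightarrow> S x1) ?F" using Sc x1 by (simp add: continuous_on_def)
      have tI: "(I \<longlongrightarrow> I x1) ?F" using Ic x1 by (simp add: continuous_on_def)
      have t\<beta>: "(\<beta> \<longlongrightarrow> \<beta> x1) ?F" using \<beta>c x1 by (simp add: continuous_on_def)
      have t\<gamma>: "(\<gamma> \<longlongrightarrow> \<gamma> x1) ?F" using \<gamma>c x1 by (simp add: continuous_on_def)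
      have tSq: "((\<lambda>x. S x powr q) \<longlongrightarrow> S x1 powr q) ?F"
        by (rule tendsto_powr[OF tS tendsto_const]) (use S1pos in simp)
      have tIp: "((\<lambda>x. I x powr p) \<longlongrightarrow> I x1 powr p) ?F"
        by (rule tendsto_powr[OF tI tendsto_const]) (use I1 in simp)
      have tf: "(f \<longlongrightarrow> f x1) ?F"
        unfolding f_def[abs_def] by (intro tendsto_intros t\<beta> t\<gamma> tSq tIp tI)
      have "eventually (\<lambda>x. 0 < f x) ?F" using order_tendstoD(1)[OF tf fpos] .
      then obtain d where d: "d > 0" "\<forall>x\<in>closure \<Omega>. 0 < dist x x1 \<and> dist x x1 < d \<longrightarrow> 0 < f x"
        by (auto simp: eventually_at)
      define U where "U = \<Omega> \<inter> ball x1 d"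
      have Uo: "open U" using op by (simp add: U_def open_Int)
      have fU: "f x > 0" if "x \<in> U" for x
      proof (cases "x = x1")
        case True thus ?thesis using fpos by simp
      next
        case False thus ?thesis using d that closure_subset by (force simp: U_def dist_commute)
      qed
      have d1: "((\<lambda>t. S (x + t *\<^sub>R axis i 1)) has_real_derivative partial i S x) (at 0)" if "x \<in> U" for x i
        using GS(4) that by (auto simp: U_def)
      have d2: "((\<lambda>t. partial i S (x + t *\<^sub>R axis i 1)) has_real_derivative partial i (\<lambda>y. partial i S y) x) (at 0)"
        if "x \<in> U" for x i
        using GS(5) that by (auto simp: U_def)
      have lpos: "(\<Sum>i\<in>UNIV. partial i (\<lambda>y. partial i S y) x) > 0" if "x \<in> U" for x
      proof -
        have "dS * laplacian S x > 0" using lapS fU that by (simp add: U_def)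
        hence "laplacian S x > 0" using dS0 by (simp add: zero_less_mult_iff)
        thus ?thesis by (simp add: lap_sum)
      qed
      have nomax: "S x < S x1" if xU: "x \<in> U" for x
      proof (rule ccontr)
        assume "\<not> S x < S x1"
        moreover have "x \<in> closure \<Omega>" using xU closure_subset by (auto simp: U_def)
        hence "S x \<le> S x1" using x1(2) by blast
        ultimately have eq: "S x = S x1" by linarith
        obtain r where r: "r > 0" "ball x r \<subseteq> U" using open_contains_ball_eq[OF Uo, of x] xU by auto
        have "\<forall>y\<in>ball x r. S y \<le> S x"
        proof
          fix y assume "y \<in> ball x r"
          hence "y \<in> U" using r by blast
          hence "y \<in> \<Omega>" by (simp add: U_def)
          hence "y \<in> closure \<Omega>" using closure_subset by blast
          thus "S y \<le> S x" using x1(2) eq by simp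
        qed
        from sdt_sum[OF d1 d2 r(1) r(2) this] lpos[OF xU] show False by simp
      qed
      show False
      proof (cases "x1 \<in> \<Omega>")
        case True
        hence "x1 \<in> U" using d by (simp add: U_def)
        from nomax[OF this] show False by simp
      next
        case False
        hence fx: "x1 \<in> frontier \<Omega>" using x1 op by (simp add: frontier_def interior_open)
        have wc: "continuous_on (closure \<Omega>) (\<lambda>x. S x - S x1)" using Sc by (intro continuous_intros)
        have wd: "\<forall>x\<in>\<Omega>. ((\<lambda>x. S x - S x1) has_derivative (\<lambda>h. GS x \<bullet> h)) (at x)"
        proof
          fix x assume "x \<in> \<Omega>"
          hence "((\<lambda>x. S x - S x1) has_derivative (\<lambda>h. GS x \<bullet> h - 0)) (at x)"
            using GS(3) by (intro derivative_intros) auto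
          thus "((\<lambda>x. S x - S x1) has_derivative (\<lambda>h. GS x \<bullet> h)) (at x)" by simp
        qed
        have d1': "((\<lambda>t. S (x + t *\<^sub>R axis i 1) - S x1) has_real_derivative partial i S x) (at 0)" if "x \<in> U" for x i
          using d1[OF that, of i] by (auto intro!: derivative_eq_intros)
        have ell: "\<forall>x\<in>U. (\<Sum>i\<in>UNIV. partial i (\<lambda>y. partial i S y) x) \<ge> (\<lambda>_. 0) x * (S x - S x1)"
          using lpos by (simp add: less_imp_le)
        have cb: "\<forall>x\<in>U. 0 \<le> (\<lambda>_. 0::real) x \<and> (\<lambda>_. 0::real) x \<le> 0" by simp
        show False
          by (rule boundary_contra[OF bsd fx wc _ wd GS(1) _ Uo d1' d2 ell cb d(1)])
             (use GS(2) fx nomax in \<open>auto simp: U_def\<close>)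
      qed
    qed
    have bound1: "S x1 \<le> Rs powr (1/q) * K powr ((1 - p)/q)"
    proof (cases "S x1 = 0")
      case True thus ?thesis by simp
    next
      case False
      hence S1pos: "S x1 > 0" using S1 by simp
      have b1: "\<beta> x1 > 0" "\<gamma> x1 > 0" using \<beta>pos \<gamma>pos x1 by auto
      have ipp: "I x1 powr p > 0" using I1 by simp
      have "\<beta> x1 * S x1 powr q * I x1 powr p \<le> \<gamma> x1 * I x1" using fx1 by (simp add: f_def)
      hence "S x1 powr q \<le> (\<gamma> x1 * I x1) / (\<beta> x1 * I x1 powr p)"
        using b1 ipp by (simp add: field_simps)
      also have "(\<gamma> x1 * I x1) / (\<beta> x1 * I x1 powr p) = (\<gamma> x1 / \<beta> x1) * I x1 powr (1 - p)"
        using I1 by (simp add: powr_diff)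
      also have "\<dots> \<le> Rs * K powr (1 - p)"
      proof (rule mult_mono)
        show "\<gamma> x1 / \<beta> x1 \<le> Rs" by (rule rle[OF x1(1)])
        show "I x1 powr (1 - p) \<le> K powr (1 - p)" using IK[OF x1(1)] I1 p1 by (intro powr_mono2) auto
      qed (use Rs0 in auto)
      finally have Sq: "S x1 powr q \<le> Rs * K powr (1 - p)" .
      have "S x1 = (S x1 powr q) powr (1/q)" using S1pos q0 by (simp add: powr_powr)
      also have "\<dots> \<le> (Rs * K powr (1 - p)) powr (1/q)" using Sq q0 by (intro powr_mono2) auto
      also have "\<dots> = Rs powr (1/q) * (K powr (1 - p)) powr (1/q)" using Rs0 by (simp add: powr_mult)
      also have "(K powr (1 - p)) powr (1/q) = K powr ((1 - p)/q)" by (simp add: powr_powr)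
      finally show ?thesis .
    qed
    show ?thesis using x1(2) bound1 by force
  qed
  have int_ok: "\<forall>x\<in>\<Omega>. S x + I x \<le> K + Rs powr (1/q) * K powr ((1 - p)/q)"
  proof
    fix x assume "x \<in> \<Omega>"
    hence xc: "x \<in> closure \<Omega>" using closure_subset by blast
    show "S x + I x \<le> K + Rs powr (1/q) * K powr ((1 - p)/q)" using Sb xc IK[OF xc] by force
  qed
  have Nle: "N \<le> (K + Rs powr (1/q) * K powr ((1 - p)/q)) * measure lebesgue \<Omega>"
    by (rule int_upper[OF L intN N0 int_ok])
  have mpos: "measure lebesgue \<Omega> > 0"
  proof (rule ccontr)
    assume "\<not> measure lebesgue \<Omega> > 0"
    hence "measure lebesgue \<Omega> = 0" using measure_nonneg[of lebesgue \<Omega>] by linarith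
    thus False using Nle N0 by simp
  qed
  have lower: "K \<ge> M" if M: "M > 0 \<and> N / measure lebesgue \<Omega> = M + Rs powr (1 / q) * M powr ((1 - p) / q)" for M
  proof (rule ccontr)
    assume "\<not> K \<ge> M"
    hence KM: "K < M" by simp
    have "K powr ((1 - p)/q) \<le> M powr ((1 - p)/q)"
      using KM K0 p1 q0 by (intro powr_mono2) auto
    hence "Rs powr (1/q) * K powr ((1 - p)/q) \<le> Rs powr (1/q) * M powr ((1 - p)/q)"
      by (intro mult_left_mono) auto
    hence "K + Rs powr (1/q) * K powr ((1 - p)/q) < N / measure lebesgue \<Omega>" using M KM by linarith
    hence "(K + Rs powr (1/q) * K powr ((1 - p)/q)) * measure lebesgue \<Omega> < N"
      using mpos by (simp add: pos_less_divide_eq)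
    thus False using Nle by simp
  qed
  have upper: "K \<le> N / measure lebesgue \<Omega>" if "dS \<le> dI"
  proof -
    have "\<forall>x\<in>\<Omega>. \<kappa> \<le> dI * (S x + I x)"
    proof
      fix x assume x: "x \<in> \<Omega>"
      hence xc: "x \<in> closure \<Omega>" using closure_subset by blast
      have "\<kappa> = dS * S x + dI * I x" using uconst xc by (simp add: u_def)
      also have "\<dots> \<le> dI * S x + dI * I x" using that nonneg xc by (simp add: mult_right_mono)
      finally show "\<kappa> \<le> dI * (S x + I x)" by (simp add: algebra_simps)
    qed
    hence "\<forall>x\<in>\<Omega>. \<kappa> / dI \<le> S x + I x" using dI0 by (simp add: field_simps)
    from int_lower[OF L intN N0 this] have "K * measure lebesgue \<Omega> \<le> N" by (simp add: K_def)
    thus ?thesis using mpos by (simp add: pos_le_divide_eq)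
  qed
  show ?thesis
  proof (intro exI[of _ \<kappa>] conjI kpos allI impI)
    show "\<forall>x\<in>closure \<Omega>. dS * S x + dI * I x = \<kappa>" using uconst by (simp add: u_def)
  next
    fix M assume "M > 0 \<and> N / measure lebesgue \<Omega> = M + (Sup ((\<lambda>x. \<gamma> x / \<beta> x) ` closure \<Omega>)) powr (1 / q) * M powr ((1 - p) / q)"
    thus "\<kappa> / dI \<ge> M" using lower by (simp add: Rs_def K_def)
  next
    assume "dS \<le> dI" thus "\<kappa> / dI \<le> N / measure lebesgue \<Omega>" using upper by (simp add: K_def)
  qed
qed

end
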